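(* For every $n\ge 1$, $d(L(n,2n-2)) \ge n^2 - \lfloor \frac{8n}{5}\rfloor$.
   Context: For positive integers $n,k$, let $\mathcal{L}_{n,k}$ be the set of $n\times n$ squares all of whose entries are colored with colors from a fixed set of $k$ colors $\{1,\dots,k\}$ such that any two entries in the same row, or in the same column, have different colors. A partial coloring of an $n\times n$ square assigns colors from $\{1,\dots,k\}$ to some of its entries; the remaining entries are called uncolored. A partial coloring extends to $L(n,k)$ if the uncolored entries can be colored so that the resulting fully colored square lies in $\mathcal{L}_{n,k}$ (keeping the given colors), and it uniquely extends to $L(n,k)$ if there is exactly one such way. A defining set of the $k$-coloring of an $n\times n$ square is the set of colored entries of a partial coloring that uniquely extends to $L(n,k)$; the defining number $d(L(n,k))$ is the minimum cardinality of such a defining set. *)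

theory Defs
  imports Complex_Main
begin

definition square :: "nat \<Rightarrow> (nat \<times> nat) set" where
  "square n = {..<n} \<times> {..<n}"

definition partial_coloring :: "nat \<Rightarrow> nat \<Rightarrow> (nat \<times> nat \<rightharpoonup> nat) \<Rightarrow> bool" where
  "partial_coloring n k P \<longleftrightarrow> dom P \<subseteq> square n \<and> ran P \<subseteq> {1..k}"

definition L_set :: "nat \<Rightarrow> nat \<Rightarrow> (nat \<times> nat \<rightharpoonup> nat) set" where
  "L_set n k = {f. dom f = square n \<and> ran f \<subseteq> {1..k} \<and>
     (\<forall>i<n. \<forall>j<n. \<forall>j'<n. j \<noteq> j' \<longrightarrow> f (i,j) \<noteq> f (i,j')) \<and>
     (\<forall>j<n. \<forall>i<n. \<forall>i'<n. i \<noteq> i' \<longrightarrow> f (i,j) \<noteq> f (i',j))}"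

definition uniquely_extends :: "nat \<Rightarrow> nat \<Rightarrow> (nat \<times> nat \<rightharpoonup> nat) \<Rightarrow> bool" where
  "uniquely_extends n k P \<longleftrightarrow> (\<exists>!f. f \<in> L_set n k \<and> P \<subseteq>\<^sub>m f)"

definition defining_number :: "nat \<Rightarrow> nat \<Rightarrow> nat" where
  "defining_number n k = Inf {card (dom P) | P. partial_coloring n k P \<and> uniquely_extends n k P}"

end

theory Submission
  imports Defs
begin

definition latin :: "nat \<Rightarrow> nat \<Rightarrow> (nat \<Rightarrow> nat \<Rightarrow> nat) \<Rightarrow> bool" where
  "latin n k F \<longleftrightarrow> (\<forall>i<n. \<forall>j<n. 1 \<le> F i j \<and> F i j \<le> k) \<and>
     (\<forall>i<n. \<forall>j<n. \<forall>j'<n. j \<noteq> j' \<longrightarrow> F i j \<noteq> F i j') \<and>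
     (\<forall>j<n. \<forall>i<n. \<forall>i'<n. i \<noteq> i' \<longrightarrow> F i j \<noteq> F i' j)"

definition forced :: "nat \<Rightarrow> nat \<Rightarrow> (nat \<Rightarrow> nat \<Rightarrow> nat) \<Rightarrow> (nat \<times> nat) set \<Rightarrow> bool" where
  "forced n k F S \<longleftrightarrow> latin n k F \<and> (\<forall>G. latin n k G \<longrightarrow>
      (\<forall>i<n. \<forall>j<n. (i,j) \<notin> S \<longrightarrow> G i j = F i j) \<longrightarrow> (\<forall>i<n. \<forall>j<n. G i j = F i j))"

definition rowc :: "(nat \<Rightarrow> nat \<Rightarrow> nat) \<Rightarrow> nat \<Rightarrow> nat \<Rightarrow> nat set" where
  "rowc F n i = (\<lambda>j. F i j) ` {..<n}"
definition colc :: "(nat \<Rightarrow> nat \<Rightarrow> nat) \<Rightarrow> nat \<Rightarrow> nat \<Rightarrow> nat set" where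
  "colc F n j = (\<lambda>i. F i j) ` {..<n}"

lemma forced_mono: "forced n k F S \<Longrightarrow> T \<subseteq> S \<Longrightarrow> forced n k F T"
  unfolding forced_def by blast

lemma latin_transpose: "latin n k F \<Longrightarrow> latin n k (\<lambda>i j. F j i)"
  unfolding latin_def by blast

lemma forced_transpose:
  assumes "forced n k F S"
  shows "forced n k (\<lambda>i j. F j i) ((\<lambda>(i,j). (j,i)) ` S)"
proof -
  have L: "latin n k F" using assms forced_def by blast
  show ?thesis unfolding forced_def
  proof (intro conjI allI impI)
    show "latin n k (\<lambda>i j. F j i)" using L latin_transpose by blast
  next
    fix G i j assume G: "latin n k G" and agree: "\<forall>i<n. \<forall>j<n. (i, j) \<notin> (\<lambda>(i, j). (j, i)) ` S \<longrightarrow> G i j = F j i"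
      and ij: "i < n" "j < n"
    have "latin n k (\<lambda>i j. G j i)" using G latin_transpose by blast
    moreover have "\<forall>i<n. \<forall>j<n. (i, j) \<notin> S \<longrightarrow> G j i = F i j"
    proof (intro allI impI)
      fix a b assume "a < n" "b < n" "(a,b) \<notin> S"
      then have "(b,a) \<notin> (\<lambda>(i, j). (j, i)) ` S" by force
      then show "G b a = F a b" using agree \<open>a<n\<close> \<open>b<n\<close> by blast
    qed
    ultimately have "\<forall>i<n. \<forall>j<n. G j i = F i j" using assms unfolding forced_def by blast
    then show "G i j = F j i" using ij by blast
  qed
qed

lemma forcedD: "forced n k F S \<Longrightarrow> latin n k G \<Longrightarrow> (\<And>i j. i<n \<Longrightarrow> j<n \<Longrightarrow> (i,j) \<notin> S \<Longrightarrow> G i j = F i j)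
   \<Longrightarrow> i < n \<Longrightarrow> j < n \<Longrightarrow> G i j = F i j"
  unfolding forced_def by blast

lemma rowc_iff: "c \<in> rowc F n i \<longleftrightarrow> (\<exists>j<n. F i j = c)"
  unfolding rowc_def by auto
lemma colc_iff: "c \<in> colc F n j \<longleftrightarrow> (\<exists>i<n. F i j = c)"
  unfolding colc_def by auto

lemma rowc_T: "rowc (\<lambda>i j. F j i) n i = colc F n i"
  unfolding rowc_def colc_def by simp
lemma colc_T: "colc (\<lambda>i j. F j i) n j = rowc F n j"
  unfolding rowc_def colc_def by simp

lemma latinI:
  assumes "\<And>i j. i<n \<Longrightarrow> j<n \<Longrightarrow> 1 \<le> G i j \<and> G i j \<le> k"
    and "\<And>i j j'. i<n \<Longrightarrow> j<n \<Longrightarrow> j'<n \<Longrightarrow> j \<noteq> j' \<Longrightarrow> G i j \<noteq> G i j'"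
    and "\<And>i i' j. i<n \<Longrightarrow> i'<n \<Longrightarrow> j<n \<Longrightarrow> i \<noteq> i' \<Longrightarrow> G i j \<noteq> G i' j"
  shows "latin n k G"
  using assms unfolding latin_def by blast

lemma latin_val: "latin n k F \<Longrightarrow> i<n \<Longrightarrow> j<n \<Longrightarrow> 1 \<le> F i j \<and> F i j \<le> k"
  unfolding latin_def by blast
lemma latin_row: "latin n k F \<Longrightarrow> i<n \<Longrightarrow> j<n \<Longrightarrow> j'<n \<Longrightarrow> j \<noteq> j' \<Longrightarrow> F i j \<noteq> F i j'"
  unfolding latin_def by blast
lemma latin_col: "latin n k F \<Longrightarrow> i<n \<Longrightarrow> i'<n \<Longrightarrow> j<n \<Longrightarrow> i \<noteq> i' \<Longrightarrow> F i j \<noteq> F i' j"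
  unfolding latin_def by blast

lemma single_cover:
  assumes fo: "forced n k F {(i,j)}" and ij: "i < n" "j < n" and c: "1 \<le> c" "c \<le> k"
  shows "c \<in> rowc F n i \<or> c \<in> colc F n j"
proof (rule ccontr)
  assume nc: "\<not> (c \<in> rowc F n i \<or> c \<in> colc F n j)"
  then have nr: "\<And>b. b < n \<Longrightarrow> F i b \<noteq> c" and ncl: "\<And>a. a < n \<Longrightarrow> F a j \<noteq> c"
    by (auto simp: rowc_iff colc_iff)
  have L: "latin n k F" using fo forced_def by blast
  define G where "G = (\<lambda>a b. if a = i \<and> b = j then c else F a b)"
  have "latin n k G"
  proof (rule latinI)
    fix a b assume "a<n" "b<n" then show "1 \<le> G a b \<and> G a b \<le> k"
      using latin_val[OF L] c by (simp add: G_def)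
  next
    fix a b b' assume "a<n" "b<n" "b'<n" "b \<noteq> b'"
    then show "G a b \<noteq> G a b'" using latin_row[OF L, of a b b'] nr[of b] nr[of b'] unfolding G_def by auto
  next
    fix a a' b assume "a<n" "a'<n" "b<n" "a \<noteq> a'"
    then show "G a b \<noteq> G a' b" using latin_col[OF L, of a a' b] ncl[of a] ncl[of a'] unfolding G_def by auto
  qed
  moreover have agree: "\<And>a b. a<n \<Longrightarrow> b<n \<Longrightarrow> (a,b) \<notin> {(i,j)} \<Longrightarrow> G a b = F a b"
    by (auto simp: G_def)
  ultimately have "G i j = F i j" using forcedD[OF fo _ agree ij] by blast
  then have "c = F i j" by (simp add: G_def)
  then show False using nr ij by auto
qed

lemma card_rowc: assumes L: "latin n k F" and i: "i < n" shows "card (rowc F n i) = n"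
proof -
  have "inj_on (\<lambda>j. F i j) {..<n}"
    unfolding inj_on_def using latin_row[OF L i] by blast
  then show ?thesis unfolding rowc_def by (simp add: card_image)
qed
lemma card_colc: assumes L: "latin n k F" and j: "j < n" shows "card (colc F n j) = n"
proof -
  have "inj_on (\<lambda>i. F i j) {..<n}"
    unfolding inj_on_def using latin_col[OF L _ _ j] by blast
  then show ?thesis unfolding colc_def by (simp add: card_image)
qed
lemma rowc_sub: "latin n k F \<Longrightarrow> i < n \<Longrightarrow> rowc F n i \<subseteq> {1..k}"
  unfolding rowc_def latin_def by auto
lemma colc_sub: "latin n k F \<Longrightarrow> j < n \<Longrightarrow> colc F n j \<subseteq> {1..k}"
  unfolding colc_def latin_def by auto

lemma single_info:
  assumes fo: "forced n k F {(i,j)}" and ij: "i < n" "j < n" and k: "k = 2*n - 2"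
  shows "\<exists>s. s \<noteq> F i j \<and> 1 \<le> s \<and> s \<le> k \<and> (\<forall>c. (c \<in> rowc F n i \<and> c \<in> colc F n j) = (c = F i j \<or> c = s))
     \<and> (\<forall>c. 1 \<le> c \<and> c \<le> k \<longrightarrow> c \<in> rowc F n i \<or> c \<in> colc F n j)"
proof -
  have L: "latin n k F" using fo forced_def by blast
  let ?R = "rowc F n i" and ?C = "colc F n j"
  have cov: "{1..k} \<subseteq> ?R \<union> ?C" using single_cover[OF fo ij] by (meson UnCI atLeastAtMost_iff subsetI)
  have sub: "?R \<union> ?C \<subseteq> {1..k}" using rowc_sub[OF L ij(1)] colc_sub[OF L ij(2)] by auto
  have eq: "?R \<union> ?C = {1..k}" using cov sub by blast
  have fin: "finite ?R" "finite ?C" unfolding rowc_def colc_def by auto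
  have "card (?R \<union> ?C) + card (?R \<inter> ?C) = card ?R + card ?C" using card_Un_Int[OF fin] by simp
  then have c2: "card (?R \<inter> ?C) = 2" using eq card_rowc[OF L ij(1)] card_colc[OF L ij(2)] k
    using ij by (cases n) auto
  have a: "F i j \<in> ?R \<inter> ?C" using ij unfolding rowc_def colc_def by auto
  obtain x y where xy: "?R \<inter> ?C = {x,y}" "x \<noteq> y" using c2 card_2_iff by metis
  obtain s where s: "?R \<inter> ?C = {F i j, s}" "s \<noteq> F i j"
    using xy a by (metis doubleton_eq_iff insertE singletonD)
  have "s \<in> {1..k}" using s sub by blast
  have "\<forall>c. (c \<in> ?R \<and> c \<in> ?C) = (c = F i j \<or> c = s)" using s(1) by blast
  moreover have "\<forall>c. 1 \<le> c \<and> c \<le> k \<longrightarrow> c \<in> ?R \<or> c \<in> ?C" using eq by auto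
  ultimately show ?thesis using s(2) \<open>s \<in> {1..k}\<close> by auto
qed

lemma row_perm:
  assumes fo: "forced n k F ({i} \<times> J)" and i: "i < n" and J: "J \<subseteq> {..<n}"
    and pout: "\<And>j. j \<notin> J \<Longrightarrow> p j = j" and pin: "\<And>j. j \<in> J \<Longrightarrow> p j \<in> J" and inj: "inj_on p J"
    and nocol: "\<And>j. j \<in> J \<Longrightarrow> p j \<noteq> j \<Longrightarrow> F i (p j) \<notin> colc F n j"
  shows "\<forall>j\<in>J. p j = j"
proof -
  have L: "latin n k F" using fo forced_def by blast
  define G where "G = (\<lambda>a b. if a = i then F i (p b) else F a b)"
  have pn: "\<And>b. b < n \<Longrightarrow> p b < n" using J pout pin by (metis lessThan_iff subsetD)
  have pinj: "\<And>b b'. b < n \<Longrightarrow> b' < n \<Longrightarrow> b \<noteq> b' \<Longrightarrow> p b \<noteq> p b'"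
    using inj pout pin unfolding inj_on_def by metis
  have "latin n k G"
  proof (rule latinI)
    fix a b assume "a<n" "b<n" then show "1 \<le> G a b \<and> G a b \<le> k"
      using latin_val[OF L] pn i by (simp add: G_def)
  next
    fix a b b' assume "a<n" "b<n" "b'<n" "b \<noteq> b'"
    then show "G a b \<noteq> G a b'" using latin_row[OF L] pn pinj i unfolding G_def by simp
  next
    fix a a' b assume ab: "a<n" "a'<n" "b<n" "a \<noteq> a'"
    show "G a b \<noteq> G a' b"
    proof (cases "p b = b")
      case True
      then show ?thesis using latin_col[OF L] ab unfolding G_def by simp
    next
      case False
      then have bJ: "b \<in> J" using pout by blast
      have "F i (p b) \<notin> colc F n b" using nocol[OF bJ False] .
      then have "\<And>x. x < n \<Longrightarrow> F x b \<noteq> F i (p b)" by (auto simp: colc_iff)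
      note nf = this
      show ?thesis
      proof (cases "a = i")
        case True
        then show ?thesis using nf[of a'] ab unfolding G_def by auto
      next
        case False
        show ?thesis
        proof (cases "a' = i")
          case True
          then show ?thesis using nf[of a] ab unfolding G_def by auto
        next
          case False
          then show ?thesis using \<open>a \<noteq> i\<close> latin_col[OF L] ab unfolding G_def by auto
        qed
      qed
    qed
  qed
  moreover have agree: "\<And>a b. a<n \<Longrightarrow> b<n \<Longrightarrow> (a,b) \<notin> {i} \<times> J \<Longrightarrow> G a b = F a b"
    using pout by (auto simp: G_def)
  ultimately have GF: "\<And>b. b < n \<Longrightarrow> G i b = F i b" using forcedD[OF fo _ agree i] by blast
  show ?thesis
  proof
    fix j assume "j \<in> J"
    then have "j < n" using J by auto
    then have "F i (p j) = F i j" using GF[of j] by (simp add: G_def)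
    then show "p j = j" using latin_row[OF L i pn[OF \<open>j<n\<close>] \<open>j<n\<close>] by auto
  qed
qed

lemma row_swap:
  assumes fo: "forced n k F {(i,j),(i,j')}" and i: "i < n" and j: "j < n" "j' < n" "j \<noteq> j'"
  shows "F i j' \<in> colc F n j \<or> F i j \<in> colc F n j'"
proof (rule ccontr)
  assume H: "\<not> ?thesis"
  define p where "p = (\<lambda>x. if x = j then j' else if x = j' then j else x)"
  have fo': "forced n k F ({i} \<times> {j,j'})" using fo by (simp add: insert_commute)
  have "\<forall>x\<in>{j,j'}. p x = x"
    apply (rule row_perm[OF fo' i])
    using j H by (auto simp: p_def inj_on_def)
  then show False using j by (auto simp: p_def)
qed

lemma col_swap:
  assumes fo: "forced n k F {(i,j),(i',j)}" and j: "j < n" and i: "i < n" "i' < n" "i \<noteq> i'"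
  shows "F i' j \<in> rowc F n i \<or> F i j \<in> rowc F n i'"
proof -
  have "forced n k (\<lambda>a b. F b a) ((\<lambda>(a,b). (b,a)) ` {(i,j),(i',j)})" by (rule forced_transpose[OF fo])
  then have "forced n k (\<lambda>a b. F b a) {(j,i),(j,i')}" by simp
  from row_swap[OF this j i] show ?thesis by (simp add: colc_T)
qed

lemma row_rot3:
  assumes fo: "forced n k F {(i,j1),(i,j2),(i,j3)}" and i: "i < n" and j: "j1 < n" "j2 < n" "j3 < n"
    "j1 \<noteq> j2" "j2 \<noteq> j3" "j1 \<noteq> j3"
  shows "F i j2 \<in> colc F n j1 \<or> F i j3 \<in> colc F n j2 \<or> F i j1 \<in> colc F n j3"
proof (rule ccontr)
  assume H: "\<not> ?thesis"
  define p where "p = (\<lambda>x. if x = j1 then j2 else if x = j2 then j3 else if x = j3 then j1 else x)"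
  have fo': "forced n k F ({i} \<times> {j1,j2,j3})" using fo by simp
  have "\<forall>x\<in>{j1,j2,j3}. p x = x"
    apply (rule row_perm[OF fo' i])
    using j H by (auto simp: p_def inj_on_def)
  then show False using j by (auto simp: p_def)
qed

lemma row_three:
  assumes fo: "forced n k F {(i,j1),(i,j2),(i,j3)}" and i: "i < n" and j: "j1 < n" "j2 < n" "j3 < n"
    "j1 \<noteq> j2" "j2 \<noteq> j3" "j1 \<noteq> j3" and k: "k = 2*n-2"
  shows False
proof -
  have L: "latin n k F" using fo forced_def by blast
  let ?a1 = "F i j1" and ?a2 = "F i j2" and ?a3 = "F i j3"
  have d: "?a1 \<noteq> ?a2" "?a2 \<noteq> ?a3" "?a1 \<noteq> ?a3" using latin_row[OF L i] j by auto
  obtain s1 where s1: "\<forall>c. (c \<in> rowc F n i \<and> c \<in> colc F n j1) = (c = ?a1 \<or> c = s1)"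
    using single_info[OF forced_mono[OF fo] i j(1) k] by blast
  obtain s2 where s2: "\<forall>c. (c \<in> rowc F n i \<and> c \<in> colc F n j2) = (c = ?a2 \<or> c = s2)"
    using single_info[OF forced_mono[OF fo] i j(2) k] by blast
  obtain s3 where s3: "\<forall>c. (c \<in> rowc F n i \<and> c \<in> colc F n j3) = (c = ?a3 \<or> c = s3)"
    using single_info[OF forced_mono[OF fo] i j(3) k] by blast
  have inR: "?a1 \<in> rowc F n i" "?a2 \<in> rowc F n i" "?a3 \<in> rowc F n i" using j by (auto simp: rowc_iff)
  have w12: "?a2 \<in> colc F n j1 \<or> ?a1 \<in> colc F n j2"
    by (rule row_swap[OF forced_mono[OF fo] i j(1,2) j(4)]) auto
  have w23: "?a3 \<in> colc F n j2 \<or> ?a2 \<in> colc F n j3"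
    by (rule row_swap[OF forced_mono[OF fo] i j(2,3) j(5)]) auto
  have w13: "?a3 \<in> colc F n j1 \<or> ?a1 \<in> colc F n j3"
    by (rule row_swap[OF forced_mono[OF fo] i j(1,3) j(6)]) auto
  have r1: "?a2 \<in> colc F n j1 \<or> ?a3 \<in> colc F n j2 \<or> ?a1 \<in> colc F n j3"
    by (rule row_rot3[OF fo i j])
  have r2: "?a3 \<in> colc F n j1 \<or> ?a1 \<in> colc F n j2 \<or> ?a2 \<in> colc F n j3"
    using row_rot3[OF forced_mono[OF fo] i j(1,3,2)] j by (auto simp: insert_commute)
  show False using s1 s2 s3 inR w12 w23 w13 r1 r2 d by metis
qed

lemma col_three:
  assumes fo: "forced n k F {(i1,j),(i2,j),(i3,j)}" and j: "j < n" and i: "i1 < n" "i2 < n" "i3 < n"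
    "i1 \<noteq> i2" "i2 \<noteq> i3" "i1 \<noteq> i3" and k: "k = 2*n-2"
  shows False
proof -
  have "forced n k (\<lambda>a b. F b a) ((\<lambda>(a,b). (b,a)) ` {(i1,j),(i2,j),(i3,j)})" by (rule forced_transpose[OF fo])
  then have "forced n k (\<lambda>a b. F b a) {(j,i1),(j,i2),(j,i3)}" by simp
  from row_three[OF this j i k] show False .
qed

lemma upd_latin:
  assumes L: "latin n k F" and agree: "\<And>a b. (a,b) \<notin> S \<Longrightarrow> G a b = F a b"
    and val: "\<And>a b. (a,b) \<in> S \<Longrightarrow> 1 \<le> G a b \<and> G a b \<le> k"
    and rw: "\<And>a b b'. (a,b) \<in> S \<Longrightarrow> a < n \<Longrightarrow> b < n \<Longrightarrow> b' < n \<Longrightarrow> b' \<noteq> b \<Longrightarrow> G a b \<noteq> G a b'"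
    and cl: "\<And>a b a'. (a,b) \<in> S \<Longrightarrow> a < n \<Longrightarrow> b < n \<Longrightarrow> a' < n \<Longrightarrow> a' \<noteq> a \<Longrightarrow> G a b \<noteq> G a' b"
  shows "latin n k G"
proof (rule latinI)
  fix a b assume "a<n" "b<n" then show "1 \<le> G a b \<and> G a b \<le> k"
    using val agree latin_val[OF L] by (cases "(a,b) \<in> S") auto
next
  fix a b b' assume ab: "a<n" "b<n" "b'<n" "b \<noteq> b'"
  show "G a b \<noteq> G a b'"
  proof (cases "(a,b) \<in> S")
    case True then show ?thesis using rw ab by blast
  next
    case False
    show ?thesis
    proof (cases "(a,b') \<in> S")
      case True then show ?thesis using rw[OF True] ab by metis
    next
      case F2: False
      then show ?thesis using False agree latin_row[OF L] ab by metis
    qed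
  qed
next
  fix a a' b assume ab: "a<n" "a'<n" "b<n" "a \<noteq> a'"
  show "G a b \<noteq> G a' b"
  proof (cases "(a,b) \<in> S")
    case True then show ?thesis using cl ab by blast
  next
    case False
    show ?thesis
    proof (cases "(a',b) \<in> S")
      case True then show ?thesis using cl[OF True] ab by metis
    next
      case F2: False
      then show ?thesis using False agree latin_col[OF L] ab by metis
    qed
  qed
qed

lemma c4_rot:
  assumes fo: "forced n k F {(r1,c1),(r1,c2),(r2,c2),(r2,c1)}" and r: "r1 < n" "r2 < n" "r1 \<noteq> r2"
    and c: "c1 < n" "c2 < n" "c1 \<noteq> c2"
  shows "(F r1 c2 \<in> colc F n c1 \<and> F r1 c2 \<noteq> F r2 c1) \<or> (F r2 c2 \<in> rowc F n r1 \<and> F r2 c2 \<noteq> F r1 c1)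
     \<or> (F r2 c1 \<in> colc F n c2 \<and> F r2 c1 \<noteq> F r1 c2) \<or> (F r1 c1 \<in> rowc F n r2 \<and> F r1 c1 \<noteq> F r2 c2)"
proof (rule ccontr)
  assume H: "\<not> ?thesis"
  have L: "latin n k F" using fo forced_def by blast
  note lr = latin_row[OF L] and lc = latin_col[OF L]
  have h2: "\<And>a. a < n \<Longrightarrow> F a c1 = F r1 c2 \<Longrightarrow> a = r2"
  proof -
    fix a assume a: "a < n" "F a c1 = F r1 c2"
    then have "F r1 c2 \<in> colc F n c1" by (auto simp: colc_iff)
    then have "F r1 c2 = F r2 c1" using H by blast
    then show "a = r2" using a lc[OF a(1) r(2) c(1)] by auto
  qed
  have h3: "\<And>b. b < n \<Longrightarrow> F r1 b = F r2 c2 \<Longrightarrow> b = c1"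
  proof -
    fix b assume b: "b < n" "F r1 b = F r2 c2"
    then have "F r2 c2 \<in> rowc F n r1" by (auto simp: rowc_iff)
    then have "F r2 c2 = F r1 c1" using H by blast
    then show "b = c1" using b lr[OF r(1) b(1) c(1)] by auto
  qed
  have h4: "\<And>a. a < n \<Longrightarrow> F a c2 = F r2 c1 \<Longrightarrow> a = r1"
  proof -
    fix a assume a: "a < n" "F a c2 = F r2 c1"
    then have "F r2 c1 \<in> colc F n c2" by (auto simp: colc_iff)
    then have "F r2 c1 = F r1 c2" using H by blast
    then show "a = r1" using a lc[OF a(1) r(1) c(2)] by auto
  qed
  have h1: "\<And>b. b < n \<Longrightarrow> F r2 b = F r1 c1 \<Longrightarrow> b = c2"
  proof -
    fix b assume b: "b < n" "F r2 b = F r1 c1"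
    then have "F r1 c1 \<in> rowc F n r2" by (auto simp: rowc_iff)
    then have "F r1 c1 = F r2 c2" using H by blast
    then show "b = c2" using b lr[OF r(2) b(1) c(2)] by auto
  qed
  define S where "S = {(r1,c1),(r1,c2),(r2,c2),(r2,c1)}"
  define G where "G = (\<lambda>a b. if a = r1 \<and> b = c1 then F r1 c2 else if a = r1 \<and> b = c2 then F r2 c2
     else if a = r2 \<and> b = c2 then F r2 c1 else if a = r2 \<and> b = c1 then F r1 c1 else F a b)"
  have G11: "G r1 c1 = F r1 c2" and G12: "G r1 c2 = F r2 c2" and G22: "G r2 c2 = F r2 c1"
    and G21: "G r2 c1 = F r1 c1" using r c by (auto simp: G_def)
  have Go: "\<And>a b. (a,b) \<notin> S \<Longrightarrow> G a b = F a b" by (auto simp: G_def S_def)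
  have "latin n k G"
  proof (rule upd_latin[OF L Go])
    fix a b assume "(a,b) \<in> S" then show "1 \<le> G a b \<and> G a b \<le> k"
      using latin_val[OF L] r c by (auto simp: G_def S_def)
  next
    fix a b b' assume ab: "(a,b) \<in> S" "a < n" "b < n" "b' < n" "b' \<noteq> b"
    from ab(1) consider "a = r1 \<and> b = c1" | "a = r1 \<and> b = c2" | "a = r2 \<and> b = c2" | "a = r2 \<and> b = c1"
      unfolding S_def by auto
    then show "G a b \<noteq> G a b'"
    proof cases
      case 1
      show ?thesis
      proof (cases "b' = c2")
        case True
        then show ?thesis using 1 G11 G12 G22 G21 lc[OF r(1) r(2) c(2)] r by auto
      next
        case False
        then have "G a b' = F a b'" using 1 ab r c by (auto simp: G_def)
        then show ?thesis using 1 G11 G12 G22 G21 lr[OF r(1) c(2) ab(4)] False ab by auto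
      qed
    next
      case 2
      show ?thesis
      proof (cases "b' = c1")
        case True
        then show ?thesis using 2 G11 G12 G22 G21 lc[OF r(2) r(1) c(2)] r by auto
      next
        case False
        then have "G a b' = F a b'" using 2 ab r c by (auto simp: G_def)
        then show ?thesis using 2 G11 G12 G22 G21 h3[OF ab(4)] False ab by auto
      qed
    next
      case 3
      show ?thesis
      proof (cases "b' = c1")
        case True
        then show ?thesis using 3 G11 G12 G22 G21 lc[OF r(2) r(1) c(1)] r by auto
      next
        case False
        then have "G a b' = F a b'" using 3 ab r c by (auto simp: G_def)
        then show ?thesis using 3 G11 G12 G22 G21 lr[OF r(2) c(1) ab(4)] False ab by auto
      qed
    next
      case 4
      show ?thesis
      proof (cases "b' = c2")
        case True
        then show ?thesis using 4 G11 G12 G22 G21 lc[OF r(1) r(2) c(1)] r by auto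
      next
        case False
        then have "G a b' = F a b'" using 4 ab r c by (auto simp: G_def)
        then show ?thesis using 4 G11 G12 G22 G21 h1[OF ab(4)] False ab by auto
      qed
    qed
  next
    fix a b a' assume ab: "(a,b) \<in> S" "a < n" "b < n" "a' < n" "a' \<noteq> a"
    from ab(1) consider "a = r1 \<and> b = c1" | "a = r1 \<and> b = c2" | "a = r2 \<and> b = c2" | "a = r2 \<and> b = c1"
      unfolding S_def by auto
    then show "G a b \<noteq> G a' b"
    proof cases
      case 1
      show ?thesis
      proof (cases "a' = r2")
        case True
        then show ?thesis using 1 G11 G12 G22 G21 lr[OF r(1) c(2) c(1)] c by auto
      next
        case False
        then have "G a' b = F a' b" using 1 ab r c by (auto simp: G_def)
        then show ?thesis using 1 G11 G12 G22 G21 h2[OF ab(4)] False ab by auto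
      qed
    next
      case 2
      show ?thesis
      proof (cases "a' = r2")
        case True
        then show ?thesis using 2 G11 G12 G22 G21 lr[OF r(2) c(2) c(1)] c by auto
      next
        case False
        then have "G a' b = F a' b" using 2 ab r c by (auto simp: G_def)
        then show ?thesis using 2 G11 G12 G22 G21 lc[OF ab(4) r(2) c(2)] False ab by auto
      qed
    next
      case 3
      show ?thesis
      proof (cases "a' = r1")
        case True
        then show ?thesis using 3 G11 G12 G22 G21 lr[OF r(2) c(1) c(2)] c by auto
      next
        case False
        then have "G a' b = F a' b" using 3 ab r c by (auto simp: G_def)
        then show ?thesis using 3 G11 G12 G22 G21 h4[OF ab(4)] False ab by auto
      qed
    next
      case 4
      show ?thesis
      proof (cases "a' = r1")
        case True
        then show ?thesis using 4 G11 G12 G22 G21 lr[OF r(1) c(1) c(2)] c by auto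
      next
        case False
        then have "G a' b = F a' b" using 4 ab r c by (auto simp: G_def)
        then show ?thesis using 4 G11 G12 G22 G21 lc[OF ab(4) r(1) c(1)] False ab by auto
      qed
    qed
  qed
  moreover have agree: "\<And>a b. a<n \<Longrightarrow> b<n \<Longrightarrow> (a,b) \<notin> {(r1,c1),(r1,c2),(r2,c2),(r2,c1)} \<Longrightarrow> G a b = F a b"
    using Go unfolding S_def by simp
  ultimately have "G r1 c1 = F r1 c1" using forcedD[OF fo _ agree r(1) c(1)] by blast
  then have "F r1 c2 = F r1 c1" by (simp add: G11)
  then show False using lr[OF r(1) c(2) c(1)] c by auto
qed

lemma c4_abs:
  fixes R1 R2 C1 C2 :: "nat set" and k :: nat
  assumes I1: "\<forall>c. (c \<in> R1 \<and> c \<in> C1) = (c = a1 \<or> c = s1)"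
    and U1: "\<forall>c. 1 \<le> c \<and> c \<le> k \<longrightarrow> c \<in> R1 \<or> c \<in> C1"
    and D1: "s1 \<noteq> a1"
    and I2: "\<forall>c. (c \<in> R1 \<and> c \<in> C2) = (c = a2 \<or> c = s2)"
    and U2: "\<forall>c. 1 \<le> c \<and> c \<le> k \<longrightarrow> c \<in> R1 \<or> c \<in> C2"
    and D2: "s2 \<noteq> a2"
    and I3: "\<forall>c. (c \<in> R2 \<and> c \<in> C2) = (c = a3 \<or> c = s3)"
    and U3: "\<forall>c. 1 \<le> c \<and> c \<le> k \<longrightarrow> c \<in> R2 \<or> c \<in> C2"
    and D3: "s3 \<noteq> a3"
    and I4: "\<forall>c. (c \<in> R2 \<and> c \<in> C1) = (c = a4 \<or> c = s4)"
    and U4: "\<forall>c. 1 \<le> c \<and> c \<le> k \<longrightarrow> c \<in> R2 \<or> c \<in> C1"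
    and D4: "s4 \<noteq> a4"
    and K: "1 \<le> a1 \<and> a1 \<le> k" "1 \<le> a2 \<and> a2 \<le> k" "1 \<le> a3 \<and> a3 \<le> k" "1 \<le> a4 \<and> a4 \<le> k" "1 \<le> s1 \<and> s1 \<le> k" "1 \<le> s2 \<and> s2 \<le> k" "1 \<le> s3 \<and> s3 \<le> k" "1 \<le> s4 \<and> s4 \<le> k"
    and L: "a1 \<noteq> a2" "a2 \<noteq> a3" "a3 \<noteq> a4" "a4 \<noteq> a1"
    and W: "a2 \<in> C1 \<or> a1 \<in> C2" "a3 \<in> R1 \<or> a2 \<in> R2" "a4 \<in> C2 \<or> a3 \<in> C1" "a1 \<in> R2 \<or> a4 \<in> R1"
    and T1: "(a2 \<in> C1 \<and> a2 \<noteq> a4) \<or> (a3 \<in> R1 \<and> a3 \<noteq> a1) \<or> (a4 \<in> C2 \<and> a4 \<noteq> a2) \<or> (a1 \<in> R2 \<and> a1 \<noteq> a3)"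
    and T2: "(a1 \<in> C2 \<and> a1 \<noteq> a3) \<or> (a4 \<in> R1 \<and> a4 \<noteq> a2) \<or> (a3 \<in> C1 \<and> a3 \<noteq> a1) \<or> (a2 \<in> R2 \<and> a2 \<noteq> a4)"
  shows False
proof -
  have g1_a1: "(a1 \<in> C1) = (a1 \<notin> R1 \<or> a1 = a1 \<or> a1 = s1)" using I1 U1 K(1) by blast
  have g1_a2: "(a2 \<in> C1) = (a2 \<notin> R1 \<or> a2 = a1 \<or> a2 = s1)" using I1 U1 K(2) by blast
  have g1_a3: "(a3 \<in> C1) = (a3 \<notin> R1 \<or> a3 = a1 \<or> a3 = s1)" using I1 U1 K(3) by blast
  have g1_a4: "(a4 \<in> C1) = (a4 \<notin> R1 \<or> a4 = a1 \<or> a4 = s1)" using I1 U1 K(4) by blast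
  have g1_s1: "(s1 \<in> C1) = (s1 \<notin> R1 \<or> s1 = a1 \<or> s1 = s1)" using I1 U1 K(5) by blast
  have g1_s2: "(s2 \<in> C1) = (s2 \<notin> R1 \<or> s2 = a1 \<or> s2 = s1)" using I1 U1 K(6) by blast
  have g1_s3: "(s3 \<in> C1) = (s3 \<notin> R1 \<or> s3 = a1 \<or> s3 = s1)" using I1 U1 K(7) by blast
  have g1_s4: "(s4 \<in> C1) = (s4 \<notin> R1 \<or> s4 = a1 \<or> s4 = s1)" using I1 U1 K(8) by blast
  have m1: "a1 \<in> R1" "s1 \<in> R1" "s1 \<in> C1" using I1 by blast+
  have g2_a1: "(a1 \<in> C2) = (a1 \<notin> R1 \<or> a1 = a2 \<or> a1 = s2)" using I2 U2 K(1) by blast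
  have g2_a2: "(a2 \<in> C2) = (a2 \<notin> R1 \<or> a2 = a2 \<or> a2 = s2)" using I2 U2 K(2) by blast
  have g2_a3: "(a3 \<in> C2) = (a3 \<notin> R1 \<or> a3 = a2 \<or> a3 = s2)" using I2 U2 K(3) by blast
  have g2_a4: "(a4 \<in> C2) = (a4 \<notin> R1 \<or> a4 = a2 \<or> a4 = s2)" using I2 U2 K(4) by blast
  have g2_s1: "(s1 \<in> C2) = (s1 \<notin> R1 \<or> s1 = a2 \<or> s1 = s2)" using I2 U2 K(5) by blast
  have g2_s2: "(s2 \<in> C2) = (s2 \<notin> R1 \<or> s2 = a2 \<or> s2 = s2)" using I2 U2 K(6) by blast
  have g2_s3: "(s3 \<in> C2) = (s3 \<notin> R1 \<or> s3 = a2 \<or> s3 = s2)" using I2 U2 K(7) by blast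
  have g2_s4: "(s4 \<in> C2) = (s4 \<notin> R1 \<or> s4 = a2 \<or> s4 = s2)" using I2 U2 K(8) by blast
  have m2: "a2 \<in> R1" "s2 \<in> R1" "s2 \<in> C2" using I2 by blast+
  have g3_a1: "(a1 \<in> C2) = (a1 \<notin> R2 \<or> a1 = a3 \<or> a1 = s3)" using I3 U3 K(1) by blast
  have g3_a2: "(a2 \<in> C2) = (a2 \<notin> R2 \<or> a2 = a3 \<or> a2 = s3)" using I3 U3 K(2) by blast
  have g3_a3: "(a3 \<in> C2) = (a3 \<notin> R2 \<or> a3 = a3 \<or> a3 = s3)" using I3 U3 K(3) by blast
  have g3_a4: "(a4 \<in> C2) = (a4 \<notin> R2 \<or> a4 = a3 \<or> a4 = s3)" using I3 U3 K(4) by blast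
  have g3_s1: "(s1 \<in> C2) = (s1 \<notin> R2 \<or> s1 = a3 \<or> s1 = s3)" using I3 U3 K(5) by blast
  have g3_s2: "(s2 \<in> C2) = (s2 \<notin> R2 \<or> s2 = a3 \<or> s2 = s3)" using I3 U3 K(6) by blast
  have g3_s3: "(s3 \<in> C2) = (s3 \<notin> R2 \<or> s3 = a3 \<or> s3 = s3)" using I3 U3 K(7) by blast
  have g3_s4: "(s4 \<in> C2) = (s4 \<notin> R2 \<or> s4 = a3 \<or> s4 = s3)" using I3 U3 K(8) by blast
  have m3: "a3 \<in> R2" "s3 \<in> R2" "s3 \<in> C2" using I3 by blast+
  have g4_a1: "(a1 \<in> C1) = (a1 \<notin> R2 \<or> a1 = a4 \<or> a1 = s4)" using I4 U4 K(1) by blast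
  have g4_a2: "(a2 \<in> C1) = (a2 \<notin> R2 \<or> a2 = a4 \<or> a2 = s4)" using I4 U4 K(2) by blast
  have g4_a3: "(a3 \<in> C1) = (a3 \<notin> R2 \<or> a3 = a4 \<or> a3 = s4)" using I4 U4 K(3) by blast
  have g4_a4: "(a4 \<in> C1) = (a4 \<notin> R2 \<or> a4 = a4 \<or> a4 = s4)" using I4 U4 K(4) by blast
  have g4_s1: "(s1 \<in> C1) = (s1 \<notin> R2 \<or> s1 = a4 \<or> s1 = s4)" using I4 U4 K(5) by blast
  have g4_s2: "(s2 \<in> C1) = (s2 \<notin> R2 \<or> s2 = a4 \<or> s2 = s4)" using I4 U4 K(6) by blast
  have g4_s3: "(s3 \<in> C1) = (s3 \<notin> R2 \<or> s3 = a4 \<or> s3 = s4)" using I4 U4 K(7) by blast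
  have g4_s4: "(s4 \<in> C1) = (s4 \<notin> R2 \<or> s4 = a4 \<or> s4 = s4)" using I4 U4 K(8) by blast
  have m4: "a4 \<in> R2" "s4 \<in> R2" "s4 \<in> C1" using I4 by blast+
  show False using g1_a1 g1_a2 g1_a3 g1_a4 g1_s1 g1_s2 g1_s3 g1_s4 m1 g2_a1 g2_a2 g2_a3 g2_a4 g2_s1 g2_s2 g2_s3 g2_s4 m2 g3_a1 g3_a2 g3_a3 g3_a4 g3_s1 g3_s2 g3_s3 g3_s4 m3 g4_a1 g4_a2 g4_a3 g4_a4 g4_s1 g4_s2 g4_s3 g4_s4 m4 L W T1 T2 D1 D2 D3 D4
    by (smt (z3))
qed

lemma p5_abs:
  fixes X0 X1 X2 X3 X4 X5 :: "nat set" and k :: nat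
  assumes I1: "\<forall>c. (c \<in> X0 \<and> c \<in> X1) = (c = a1 \<or> c = s1)"
    and U1: "\<forall>c. 1 \<le> c \<and> c \<le> k \<longrightarrow> c \<in> X0 \<or> c \<in> X1"
    and D1: "s1 \<noteq> a1"
    and I2: "\<forall>c. (c \<in> X2 \<and> c \<in> X1) = (c = a2 \<or> c = s2)"
    and U2: "\<forall>c. 1 \<le> c \<and> c \<le> k \<longrightarrow> c \<in> X2 \<or> c \<in> X1"
    and D2: "s2 \<noteq> a2"
    and I3: "\<forall>c. (c \<in> X2 \<and> c \<in> X3) = (c = a3 \<or> c = s3)"
    and U3: "\<forall>c. 1 \<le> c \<and> c \<le> k \<longrightarrow> c \<in> X2 \<or> c \<in> X3"
    and D3: "s3 \<noteq> a3"
    and I4: "\<forall>c. (c \<in> X4 \<and> c \<in> X3) = (c = a4 \<or> c = s4)"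
    and U4: "\<forall>c. 1 \<le> c \<and> c \<le> k \<longrightarrow> c \<in> X4 \<or> c \<in> X3"
    and D4: "s4 \<noteq> a4"
    and I5: "\<forall>c. (c \<in> X4 \<and> c \<in> X5) = (c = a5 \<or> c = s5)"
    and U5: "\<forall>c. 1 \<le> c \<and> c \<le> k \<longrightarrow> c \<in> X4 \<or> c \<in> X5"
    and D5: "s5 \<noteq> a5"
    and K: "1 \<le> a1 \<and> a1 \<le> k" "1 \<le> a2 \<and> a2 \<le> k" "1 \<le> a3 \<and> a3 \<le> k" "1 \<le> a4 \<and> a4 \<le> k" "1 \<le> a5 \<and> a5 \<le> k" "1 \<le> s1 \<and> s1 \<le> k" "1 \<le> s2 \<and> s2 \<le> k" "1 \<le> s3 \<and> s3 \<le> k" "1 \<le> s4 \<and> s4 \<le> k" "1 \<le> s5 \<and> s5 \<le> k" "1 \<le> x03 \<and> x03 \<le> k" "1 \<le> x14 \<and> x14 \<le> k" "1 \<le> x25 \<and> x25 \<le> k" "1 \<le> x05 \<and> x05 \<le> k"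
    and X: "x03 \<in> X0" "x03 \<in> X3" "x14 \<in> X1" "x14 \<in> X4" "x25 \<in> X2" "x25 \<in> X5" "x05 \<in> X0" "x05 \<in> X5"
    and L: "a1 \<noteq> x03" "a1 \<noteq> x05" "x03 \<noteq> x05" "a1 \<noteq> a2" "a1 \<noteq> x14" "a2 \<noteq> x14" "a2 \<noteq> a3" "a2 \<noteq> x25" "a3 \<noteq> x25" "x03 \<noteq> a3" "x03 \<noteq> a4" "a3 \<noteq> a4" "x14 \<noteq> a4" "x14 \<noteq> a5" "a4 \<noteq> a5" "x05 \<noteq> x25" "x05 \<noteq> a5" "x25 \<noteq> a5"
    and W: "a2 \<in> X0 \<or> a1 \<in> X2" "a3 \<in> X1 \<or> a2 \<in> X3" "a4 \<in> X2 \<or> a3 \<in> X4" "a5 \<in> X3 \<or> a4 \<in> X5"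
  shows False
proof -
  have g1_a1: "(a1 \<in> X1) = (a1 \<notin> X0 \<or> a1 = a1 \<or> a1 = s1)" using I1 U1 K(1) by blast
  have g1_a2: "(a2 \<in> X1) = (a2 \<notin> X0 \<or> a2 = a1 \<or> a2 = s1)" using I1 U1 K(2) by blast
  have g1_a3: "(a3 \<in> X1) = (a3 \<notin> X0 \<or> a3 = a1 \<or> a3 = s1)" using I1 U1 K(3) by blast
  have g1_a4: "(a4 \<in> X1) = (a4 \<notin> X0 \<or> a4 = a1 \<or> a4 = s1)" using I1 U1 K(4) by blast
  have g1_a5: "(a5 \<in> X1) = (a5 \<notin> X0 \<or> a5 = a1 \<or> a5 = s1)" using I1 U1 K(5) by blast
  have g1_s1: "(s1 \<in> X1) = (s1 \<notin> X0 \<or> s1 = a1 \<or> s1 = s1)" using I1 U1 K(6) by blast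
  have g1_s2: "(s2 \<in> X1) = (s2 \<notin> X0 \<or> s2 = a1 \<or> s2 = s1)" using I1 U1 K(7) by blast
  have g1_s3: "(s3 \<in> X1) = (s3 \<notin> X0 \<or> s3 = a1 \<or> s3 = s1)" using I1 U1 K(8) by blast
  have g1_s4: "(s4 \<in> X1) = (s4 \<notin> X0 \<or> s4 = a1 \<or> s4 = s1)" using I1 U1 K(9) by blast
  have g1_s5: "(s5 \<in> X1) = (s5 \<notin> X0 \<or> s5 = a1 \<or> s5 = s1)" using I1 U1 K(10) by blast
  have g1_x03: "(x03 \<in> X1) = (x03 \<notin> X0 \<or> x03 = a1 \<or> x03 = s1)" using I1 U1 K(11) by blast
  have g1_x14: "(x14 \<in> X1) = (x14 \<notin> X0 \<or> x14 = a1 \<or> x14 = s1)" using I1 U1 K(12) by blast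
  have g1_x25: "(x25 \<in> X1) = (x25 \<notin> X0 \<or> x25 = a1 \<or> x25 = s1)" using I1 U1 K(13) by blast
  have g1_x05: "(x05 \<in> X1) = (x05 \<notin> X0 \<or> x05 = a1 \<or> x05 = s1)" using I1 U1 K(14) by blast
  have m1: "a1 \<in> X0" "s1 \<in> X0" "s1 \<in> X1" using I1 by blast+
  have g2_a1: "(a1 \<in> X1) = (a1 \<notin> X2 \<or> a1 = a2 \<or> a1 = s2)" using I2 U2 K(1) by blast
  have g2_a2: "(a2 \<in> X1) = (a2 \<notin> X2 \<or> a2 = a2 \<or> a2 = s2)" using I2 U2 K(2) by blast
  have g2_a3: "(a3 \<in> X1) = (a3 \<notin> X2 \<or> a3 = a2 \<or> a3 = s2)" using I2 U2 K(3) by blast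
  have g2_a4: "(a4 \<in> X1) = (a4 \<notin> X2 \<or> a4 = a2 \<or> a4 = s2)" using I2 U2 K(4) by blast
  have g2_a5: "(a5 \<in> X1) = (a5 \<notin> X2 \<or> a5 = a2 \<or> a5 = s2)" using I2 U2 K(5) by blast
  have g2_s1: "(s1 \<in> X1) = (s1 \<notin> X2 \<or> s1 = a2 \<or> s1 = s2)" using I2 U2 K(6) by blast
  have g2_s2: "(s2 \<in> X1) = (s2 \<notin> X2 \<or> s2 = a2 \<or> s2 = s2)" using I2 U2 K(7) by blast
  have g2_s3: "(s3 \<in> X1) = (s3 \<notin> X2 \<or> s3 = a2 \<or> s3 = s2)" using I2 U2 K(8) by blast
  have g2_s4: "(s4 \<in> X1) = (s4 \<notin> X2 \<or> s4 = a2 \<or> s4 = s2)" using I2 U2 K(9) by blast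
  have g2_s5: "(s5 \<in> X1) = (s5 \<notin> X2 \<or> s5 = a2 \<or> s5 = s2)" using I2 U2 K(10) by blast
  have g2_x03: "(x03 \<in> X1) = (x03 \<notin> X2 \<or> x03 = a2 \<or> x03 = s2)" using I2 U2 K(11) by blast
  have g2_x14: "(x14 \<in> X1) = (x14 \<notin> X2 \<or> x14 = a2 \<or> x14 = s2)" using I2 U2 K(12) by blast
  have g2_x25: "(x25 \<in> X1) = (x25 \<notin> X2 \<or> x25 = a2 \<or> x25 = s2)" using I2 U2 K(13) by blast
  have g2_x05: "(x05 \<in> X1) = (x05 \<notin> X2 \<or> x05 = a2 \<or> x05 = s2)" using I2 U2 K(14) by blast
  have m2: "a2 \<in> X2" "s2 \<in> X2" "s2 \<in> X1" using I2 by blast+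
  have g3_a1: "(a1 \<in> X3) = (a1 \<notin> X2 \<or> a1 = a3 \<or> a1 = s3)" using I3 U3 K(1) by blast
  have g3_a2: "(a2 \<in> X3) = (a2 \<notin> X2 \<or> a2 = a3 \<or> a2 = s3)" using I3 U3 K(2) by blast
  have g3_a3: "(a3 \<in> X3) = (a3 \<notin> X2 \<or> a3 = a3 \<or> a3 = s3)" using I3 U3 K(3) by blast
  have g3_a4: "(a4 \<in> X3) = (a4 \<notin> X2 \<or> a4 = a3 \<or> a4 = s3)" using I3 U3 K(4) by blast
  have g3_a5: "(a5 \<in> X3) = (a5 \<notin> X2 \<or> a5 = a3 \<or> a5 = s3)" using I3 U3 K(5) by blast
  have g3_s1: "(s1 \<in> X3) = (s1 \<notin> X2 \<or> s1 = a3 \<or> s1 = s3)" using I3 U3 K(6) by blast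
  have g3_s2: "(s2 \<in> X3) = (s2 \<notin> X2 \<or> s2 = a3 \<or> s2 = s3)" using I3 U3 K(7) by blast
  have g3_s3: "(s3 \<in> X3) = (s3 \<notin> X2 \<or> s3 = a3 \<or> s3 = s3)" using I3 U3 K(8) by blast
  have g3_s4: "(s4 \<in> X3) = (s4 \<notin> X2 \<or> s4 = a3 \<or> s4 = s3)" using I3 U3 K(9) by blast
  have g3_s5: "(s5 \<in> X3) = (s5 \<notin> X2 \<or> s5 = a3 \<or> s5 = s3)" using I3 U3 K(10) by blast
  have g3_x03: "(x03 \<in> X3) = (x03 \<notin> X2 \<or> x03 = a3 \<or> x03 = s3)" using I3 U3 K(11) by blast
  have g3_x14: "(x14 \<in> X3) = (x14 \<notin> X2 \<or> x14 = a3 \<or> x14 = s3)" using I3 U3 K(12) by blast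
  have g3_x25: "(x25 \<in> X3) = (x25 \<notin> X2 \<or> x25 = a3 \<or> x25 = s3)" using I3 U3 K(13) by blast
  have g3_x05: "(x05 \<in> X3) = (x05 \<notin> X2 \<or> x05 = a3 \<or> x05 = s3)" using I3 U3 K(14) by blast
  have m3: "a3 \<in> X2" "s3 \<in> X2" "s3 \<in> X3" using I3 by blast+
  have g4_a1: "(a1 \<in> X3) = (a1 \<notin> X4 \<or> a1 = a4 \<or> a1 = s4)" using I4 U4 K(1) by blast
  have g4_a2: "(a2 \<in> X3) = (a2 \<notin> X4 \<or> a2 = a4 \<or> a2 = s4)" using I4 U4 K(2) by blast
  have g4_a3: "(a3 \<in> X3) = (a3 \<notin> X4 \<or> a3 = a4 \<or> a3 = s4)" using I4 U4 K(3) by blast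
  have g4_a4: "(a4 \<in> X3) = (a4 \<notin> X4 \<or> a4 = a4 \<or> a4 = s4)" using I4 U4 K(4) by blast
  have g4_a5: "(a5 \<in> X3) = (a5 \<notin> X4 \<or> a5 = a4 \<or> a5 = s4)" using I4 U4 K(5) by blast
  have g4_s1: "(s1 \<in> X3) = (s1 \<notin> X4 \<or> s1 = a4 \<or> s1 = s4)" using I4 U4 K(6) by blast
  have g4_s2: "(s2 \<in> X3) = (s2 \<notin> X4 \<or> s2 = a4 \<or> s2 = s4)" using I4 U4 K(7) by blast
  have g4_s3: "(s3 \<in> X3) = (s3 \<notin> X4 \<or> s3 = a4 \<or> s3 = s4)" using I4 U4 K(8) by blast
  have g4_s4: "(s4 \<in> X3) = (s4 \<notin> X4 \<or> s4 = a4 \<or> s4 = s4)" using I4 U4 K(9) by blast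
  have g4_s5: "(s5 \<in> X3) = (s5 \<notin> X4 \<or> s5 = a4 \<or> s5 = s4)" using I4 U4 K(10) by blast
  have g4_x03: "(x03 \<in> X3) = (x03 \<notin> X4 \<or> x03 = a4 \<or> x03 = s4)" using I4 U4 K(11) by blast
  have g4_x14: "(x14 \<in> X3) = (x14 \<notin> X4 \<or> x14 = a4 \<or> x14 = s4)" using I4 U4 K(12) by blast
  have g4_x25: "(x25 \<in> X3) = (x25 \<notin> X4 \<or> x25 = a4 \<or> x25 = s4)" using I4 U4 K(13) by blast
  have g4_x05: "(x05 \<in> X3) = (x05 \<notin> X4 \<or> x05 = a4 \<or> x05 = s4)" using I4 U4 K(14) by blast
  have m4: "a4 \<in> X4" "s4 \<in> X4" "s4 \<in> X3" using I4 by blast+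
  have g5_a1: "(a1 \<in> X5) = (a1 \<notin> X4 \<or> a1 = a5 \<or> a1 = s5)" using I5 U5 K(1) by blast
  have g5_a2: "(a2 \<in> X5) = (a2 \<notin> X4 \<or> a2 = a5 \<or> a2 = s5)" using I5 U5 K(2) by blast
  have g5_a3: "(a3 \<in> X5) = (a3 \<notin> X4 \<or> a3 = a5 \<or> a3 = s5)" using I5 U5 K(3) by blast
  have g5_a4: "(a4 \<in> X5) = (a4 \<notin> X4 \<or> a4 = a5 \<or> a4 = s5)" using I5 U5 K(4) by blast
  have g5_a5: "(a5 \<in> X5) = (a5 \<notin> X4 \<or> a5 = a5 \<or> a5 = s5)" using I5 U5 K(5) by blast
  have g5_s1: "(s1 \<in> X5) = (s1 \<notin> X4 \<or> s1 = a5 \<or> s1 = s5)" using I5 U5 K(6) by blast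
  have g5_s2: "(s2 \<in> X5) = (s2 \<notin> X4 \<or> s2 = a5 \<or> s2 = s5)" using I5 U5 K(7) by blast
  have g5_s3: "(s3 \<in> X5) = (s3 \<notin> X4 \<or> s3 = a5 \<or> s3 = s5)" using I5 U5 K(8) by blast
  have g5_s4: "(s4 \<in> X5) = (s4 \<notin> X4 \<or> s4 = a5 \<or> s4 = s5)" using I5 U5 K(9) by blast
  have g5_s5: "(s5 \<in> X5) = (s5 \<notin> X4 \<or> s5 = a5 \<or> s5 = s5)" using I5 U5 K(10) by blast
  have g5_x03: "(x03 \<in> X5) = (x03 \<notin> X4 \<or> x03 = a5 \<or> x03 = s5)" using I5 U5 K(11) by blast
  have g5_x14: "(x14 \<in> X5) = (x14 \<notin> X4 \<or> x14 = a5 \<or> x14 = s5)" using I5 U5 K(12) by blast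
  have g5_x25: "(x25 \<in> X5) = (x25 \<notin> X4 \<or> x25 = a5 \<or> x25 = s5)" using I5 U5 K(13) by blast
  have g5_x05: "(x05 \<in> X5) = (x05 \<notin> X4 \<or> x05 = a5 \<or> x05 = s5)" using I5 U5 K(14) by blast
  have m5: "a5 \<in> X4" "s5 \<in> X4" "s5 \<in> X5" using I5 by blast+
  show False using g1_a1 g1_a2 g1_a3 g1_a4 g1_a5 g1_s1 g1_s2 g1_s3 g1_s4 g1_s5 g1_x03 g1_x14 g1_x25 g1_x05 m1 g2_a1 g2_a2 g2_a3 g2_a4 g2_a5 g2_s1 g2_s2 g2_s3 g2_s4 g2_s5 g2_x03 g2_x14 g2_x25 g2_x05 m2 g3_a1 g3_a2 g3_a3 g3_a4 g3_a5 g3_s1 g3_s2 g3_s3 g3_s4 g3_s5 g3_x03 g3_x14 g3_x25 g3_x05 m3 g4_a1 g4_a2 g4_a3 g4_a4 g4_a5 g4_s1 g4_s2 g4_s3 g4_s4 g4_s5 g4_x03 g4_x14 g4_x25 g4_x05 m4 g5_a1 g5_a2 g5_a3 g5_a4 g5_a5 g5_s1 g5_s2 g5_s3 g5_s4 g5_s5 g5_x03 g5_x14 g5_x25 g5_x05 m5 X L W D1 D2 D3 D4 D5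
    by (smt (z3))
qed

lemma single_obtain:
  assumes fo: "forced n k F S" and sub: "(i,j) \<in> S" and ij: "i < n" "j < n" and k: "k = 2*n-2"
  obtains s where "\<forall>c. (c \<in> rowc F n i \<and> c \<in> colc F n j) = (c = F i j \<or> c = s)"
    "\<forall>c. 1 \<le> c \<and> c \<le> k \<longrightarrow> c \<in> rowc F n i \<or> c \<in> colc F n j" "s \<noteq> F i j" "1 \<le> s \<and> s \<le> k"
proof -
  have "forced n k F {(i,j)}" using forced_mono[OF fo] sub by blast
  from single_info[OF this ij k] show ?thesis using that by blast
qed

lemma c4_grid:
  assumes fo: "forced n k F {(r1,c1),(r1,c2),(r2,c2),(r2,c1)}" and r: "r1 < n" "r2 < n" "r1 \<noteq> r2"
    and c: "c1 < n" "c2 < n" "c1 \<noteq> c2" and k: "k = 2*n-2"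
  shows False
proof -
  have L: "latin n k F" using fo forced_def by blast
  obtain s1 where S1: "\<forall>c. (c \<in> rowc F n r1 \<and> c \<in> colc F n c1) = (c = F r1 c1 \<or> c = s1)"
    "\<forall>c. 1 \<le> c \<and> c \<le> k \<longrightarrow> c \<in> rowc F n r1 \<or> c \<in> colc F n c1" "s1 \<noteq> F r1 c1" "1 \<le> s1 \<and> s1 \<le> k"
    using single_obtain[OF fo _ r(1) c(1) k] by blast
  obtain s2 where S2: "\<forall>c. (c \<in> rowc F n r1 \<and> c \<in> colc F n c2) = (c = F r1 c2 \<or> c = s2)"
    "\<forall>c. 1 \<le> c \<and> c \<le> k \<longrightarrow> c \<in> rowc F n r1 \<or> c \<in> colc F n c2" "s2 \<noteq> F r1 c2" "1 \<le> s2 \<and> s2 \<le> k"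
    using single_obtain[OF fo _ r(1) c(2) k] by blast
  obtain s3 where S3: "\<forall>c. (c \<in> rowc F n r2 \<and> c \<in> colc F n c2) = (c = F r2 c2 \<or> c = s3)"
    "\<forall>c. 1 \<le> c \<and> c \<le> k \<longrightarrow> c \<in> rowc F n r2 \<or> c \<in> colc F n c2" "s3 \<noteq> F r2 c2" "1 \<le> s3 \<and> s3 \<le> k"
    using single_obtain[OF fo _ r(2) c(2) k] by blast
  obtain s4 where S4: "\<forall>c. (c \<in> rowc F n r2 \<and> c \<in> colc F n c1) = (c = F r2 c1 \<or> c = s4)"
    "\<forall>c. 1 \<le> c \<and> c \<le> k \<longrightarrow> c \<in> rowc F n r2 \<or> c \<in> colc F n c1" "s4 \<noteq> F r2 c1" "1 \<le> s4 \<and> s4 \<le> k"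
    using single_obtain[OF fo _ r(2) c(1) k] by blast
  have V: "1 \<le> F r1 c1 \<and> F r1 c1 \<le> k" "1 \<le> F r1 c2 \<and> F r1 c2 \<le> k" "1 \<le> F r2 c2 \<and> F r2 c2 \<le> k"
     "1 \<le> F r2 c1 \<and> F r2 c1 \<le> k" using latin_val[OF L] r c by auto
  have LL: "F r1 c1 \<noteq> F r1 c2" "F r1 c2 \<noteq> F r2 c2" "F r2 c2 \<noteq> F r2 c1" "F r2 c1 \<noteq> F r1 c1"
    using latin_row[OF L] latin_col[OF L] r c by metis+
  have W1: "F r1 c2 \<in> colc F n c1 \<or> F r1 c1 \<in> colc F n c2"
    by (rule row_swap[OF forced_mono[OF fo] r(1) c]) auto
  have W2: "F r2 c2 \<in> rowc F n r1 \<or> F r1 c2 \<in> rowc F n r2"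
    by (rule col_swap[OF forced_mono[OF fo] c(2) r]) auto
  have W3: "F r2 c1 \<in> colc F n c2 \<or> F r2 c2 \<in> colc F n c1"
    by (rule row_swap[OF forced_mono[OF fo] r(2) c(2) c(1)]) (use c in auto)
  have W4: "F r1 c1 \<in> rowc F n r2 \<or> F r2 c1 \<in> rowc F n r1"
    by (rule col_swap[OF forced_mono[OF fo] c(1) r(2) r(1)]) (use r in auto)
  note T1 = c4_rot[OF fo r c]
  have fo': "forced n k F {(r1,c2),(r1,c1),(r2,c1),(r2,c2)}" using forced_mono[OF fo] by auto
  note T2 = c4_rot[OF fo' r c(2) c(1)] 
  show False
    using c4_abs[OF S1(1,2,3) S2(1,2,3) S3(1,2,3) S4(1,2,3) V S1(4) S2(4) S3(4) S4(4) LL W1 W2 W3 W4] T1 T2 c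
    by auto
qed

lemma p5_grid:
  assumes fo: "forced n k F {(r0,c1),(r2,c1),(r2,c3),(r4,c3),(r4,c5)}"
    and r: "r0 < n" "r2 < n" "r4 < n" "r0 \<noteq> r2" "r2 \<noteq> r4" "r0 \<noteq> r4"
    and c: "c1 < n" "c3 < n" "c5 < n" "c1 \<noteq> c3" "c3 \<noteq> c5" "c1 \<noteq> c5" and k: "k = 2*n-2"
  shows False
proof -
  have L: "latin n k F" using fo forced_def by blast
  obtain s1 where S1: "\<forall>c. (c \<in> rowc F n r0 \<and> c \<in> colc F n c1) = (c = F r0 c1 \<or> c = s1)"
    "\<forall>c. 1 \<le> c \<and> c \<le> k \<longrightarrow> c \<in> rowc F n r0 \<or> c \<in> colc F n c1" "s1 \<noteq> F r0 c1" "1 \<le> s1 \<and> s1 \<le> k"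
    using single_obtain[OF fo _ r(1) c(1) k] by blast
  obtain s2 where S2: "\<forall>c. (c \<in> rowc F n r2 \<and> c \<in> colc F n c1) = (c = F r2 c1 \<or> c = s2)"
    "\<forall>c. 1 \<le> c \<and> c \<le> k \<longrightarrow> c \<in> rowc F n r2 \<or> c \<in> colc F n c1" "s2 \<noteq> F r2 c1" "1 \<le> s2 \<and> s2 \<le> k"
    using single_obtain[OF fo _ r(2) c(1) k] by blast
  obtain s3 where S3: "\<forall>c. (c \<in> rowc F n r2 \<and> c \<in> colc F n c3) = (c = F r2 c3 \<or> c = s3)"
    "\<forall>c. 1 \<le> c \<and> c \<le> k \<longrightarrow> c \<in> rowc F n r2 \<or> c \<in> colc F n c3" "s3 \<noteq> F r2 c3" "1 \<le> s3 \<and> s3 \<le> k"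
    using single_obtain[OF fo _ r(2) c(2) k] by blast
  obtain s4 where S4: "\<forall>c. (c \<in> rowc F n r4 \<and> c \<in> colc F n c3) = (c = F r4 c3 \<or> c = s4)"
    "\<forall>c. 1 \<le> c \<and> c \<le> k \<longrightarrow> c \<in> rowc F n r4 \<or> c \<in> colc F n c3" "s4 \<noteq> F r4 c3" "1 \<le> s4 \<and> s4 \<le> k"
    using single_obtain[OF fo _ r(3) c(2) k] by blast
  obtain s5 where S5: "\<forall>c. (c \<in> rowc F n r4 \<and> c \<in> colc F n c5) = (c = F r4 c5 \<or> c = s5)"
    "\<forall>c. 1 \<le> c \<and> c \<le> k \<longrightarrow> c \<in> rowc F n r4 \<or> c \<in> colc F n c5" "s5 \<noteq> F r4 c5" "1 \<le> s5 \<and> s5 \<le> k"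
    using single_obtain[OF fo _ r(3) c(3) k] by blast
  have V: "1 \<le> F r0 c1 \<and> F r0 c1 \<le> k" "1 \<le> F r2 c1 \<and> F r2 c1 \<le> k" "1 \<le> F r2 c3 \<and> F r2 c3 \<le> k" "1 \<le> F r4 c3 \<and> F r4 c3 \<le> k" "1 \<le> F r4 c5 \<and> F r4 c5 \<le> k" using latin_val[OF L] r c by auto
  have VX: "1 \<le> F r0 c3 \<and> F r0 c3 \<le> k" "1 \<le> F r4 c1 \<and> F r4 c1 \<le> k" "1 \<le> F r2 c5 \<and> F r2 c5 \<le> k" "1 \<le> F r0 c5 \<and> F r0 c5 \<le> k" using latin_val[OF L] r c by auto
  have X: "F r0 c3 \<in> rowc F n r0" "F r0 c3 \<in> colc F n c3" "F r4 c1 \<in> colc F n c1" "F r4 c1 \<in> rowc F n r4"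
    "F r2 c5 \<in> rowc F n r2" "F r2 c5 \<in> colc F n c5" "F r0 c5 \<in> rowc F n r0" "F r0 c5 \<in> colc F n c5"
    using r c by (auto simp: rowc_iff colc_iff)
  have LL: "F r0 c1 \<noteq> F r0 c3" "F r0 c1 \<noteq> F r0 c5" "F r0 c3 \<noteq> F r0 c5" "F r0 c1 \<noteq> F r2 c1" "F r0 c1 \<noteq> F r4 c1" "F r2 c1 \<noteq> F r4 c1" "F r2 c1 \<noteq> F r2 c3" "F r2 c1 \<noteq> F r2 c5" "F r2 c3 \<noteq> F r2 c5" "F r0 c3 \<noteq> F r2 c3" "F r0 c3 \<noteq> F r4 c3" "F r2 c3 \<noteq> F r4 c3" "F r4 c1 \<noteq> F r4 c3" "F r4 c1 \<noteq> F r4 c5" "F r4 c3 \<noteq> F r4 c5" "F r0 c5 \<noteq> F r2 c5" "F r0 c5 \<noteq> F r4 c5" "F r2 c5 \<noteq> F r4 c5"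
    using latin_row[OF L] latin_col[OF L] r c by metis+
  have W1: "F r2 c1 \<in> rowc F n r0 \<or> F r0 c1 \<in> rowc F n r2"
    by (rule col_swap[OF forced_mono[OF fo] c(1) r(1) r(2) r(4)]) auto
  have W2: "F r2 c3 \<in> colc F n c1 \<or> F r2 c1 \<in> colc F n c3"
    by (rule row_swap[OF forced_mono[OF fo] r(2) c(1) c(2) c(4)]) auto
  have W3: "F r4 c3 \<in> rowc F n r2 \<or> F r2 c3 \<in> rowc F n r4"
    by (rule col_swap[OF forced_mono[OF fo] c(2) r(2) r(3) r(5)]) auto
  have W4: "F r4 c5 \<in> colc F n c3 \<or> F r4 c3 \<in> colc F n c5"
    by (rule row_swap[OF forced_mono[OF fo] r(3) c(2) c(3) c(5)]) auto
  show False
    by (rule p5_abs[OF S1(1,2,3) S2(1,2,3) S3(1,2,3) S4(1,2,3) S5(1,2,3) V S1(4) S2(4) S3(4) S4(4) S5(4) VX X LL W1 W2 W3 W4])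
qed

definition rU :: "(nat \<times> nat) set \<Rightarrow> nat \<Rightarrow> nat set" where "rU U i = {j. (i,j) \<in> U}"
definition cU :: "(nat \<times> nat) set \<Rightarrow> nat \<Rightarrow> nat set" where "cU U j = {i. (i,j) \<in> U}"

lemma three_elems:
  assumes "3 \<le> card A"
  obtains x y z where "x \<in> A" "y \<in> A" "z \<in> A" "x \<noteq> y" "y \<noteq> z" "x \<noteq> z"
proof -
  obtain T where T: "T \<subseteq> A" "card T = 3" using obtain_subset_with_card_n[OF assms] by metis
  then obtain x y z where "T = {x,y,z}" "x \<noteq> y" "y \<noteq> z" "x \<noteq> z" using card_3_iff by metis
  then show ?thesis using that T(1) by auto
qed

lemma rU_fin: "U \<subseteq> square n \<Longrightarrow> finite (rU U i)"
  unfolding rU_def square_def by (rule finite_subset[of _ "{..<n}"]) auto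
lemma cU_fin: "U \<subseteq> square n \<Longrightarrow> finite (cU U j)"
  unfolding cU_def square_def by (rule finite_subset[of _ "{..<n}"]) auto

lemma deg_row:
  assumes fo: "forced n k F U" and sq: "U \<subseteq> square n" and k: "k = 2*n-2"
  shows "card (rU U i) \<le> 2"
proof (rule ccontr)
  assume "\<not> ?thesis"
  then have "3 \<le> card (rU U i)" by simp
  then obtain j1 j2 j3 where j: "j1 \<in> rU U i" "j2 \<in> rU U i" "j3 \<in> rU U i" "j1 \<noteq> j2" "j2 \<noteq> j3" "j1 \<noteq> j3"
    by (rule three_elems)
  then have inU: "(i,j1) \<in> U" "(i,j2) \<in> U" "(i,j3) \<in> U" by (auto simp: rU_def)
  then have lt: "i < n" "j1 < n" "j2 < n" "j3 < n" using sq by (auto simp: square_def)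
  have "forced n k F {(i,j1),(i,j2),(i,j3)}" using forced_mono[OF fo] inU by auto
  from row_three[OF this lt j(4-6) k] show False .
qed

lemma deg_col:
  assumes fo: "forced n k F U" and sq: "U \<subseteq> square n" and k: "k = 2*n-2"
  shows "card (cU U j) \<le> 2"
proof (rule ccontr)
  assume "\<not> ?thesis"
  then have "3 \<le> card (cU U j)" by simp
  then obtain i1 i2 i3 where i: "i1 \<in> cU U j" "i2 \<in> cU U j" "i3 \<in> cU U j" "i1 \<noteq> i2" "i2 \<noteq> i3" "i1 \<noteq> i3"
    by (rule three_elems)
  then have inU: "(i1,j) \<in> U" "(i2,j) \<in> U" "(i3,j) \<in> U" by (auto simp: cU_def)
  then have lt: "j < n" "i1 < n" "i2 < n" "i3 < n" using sq by (auto simp: square_def)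
  have "forced n k F {(i1,j),(i2,j),(i3,j)}" using forced_mono[OF fo] inU by auto
  from col_three[OF this lt i(4-6) k] show False .
qed

lemma wsum:
  assumes V: "V \<subseteq> {..<n} \<times> {..<n}" and d: "\<And>i. card {j. (i,j) \<in> V} \<le> 2"
  shows "(\<Sum>u\<in>V. (if card {j. (fst u,j) \<in> V} = 1 then 2 else 1::nat)) \<le> 2*n"
proof -
  define B where "B = (\<lambda>i. {j. (i,j) \<in> V})"
  define w where "w = (\<lambda>i. if card (B i) = 1 then 2 else (1::nat))"
  have finB: "\<And>i. finite (B i)"
  proof -
    fix i show "finite (B i)"
    proof (rule finite_subset[of _ "{..<n}"])
      show "B i \<subseteq> {..<n}" using V unfolding B_def by blast
    qed simp
  qed
  have VS: "V = (SIGMA i:{..<n}. B i)" using V unfolding B_def by blast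
  have "(\<Sum>u\<in>V. (if card {j. (fst u,j) \<in> V} = 1 then 2 else 1::nat)) = (\<Sum>u\<in>V. w (fst u))"
    unfolding w_def B_def by simp
  also have "\<dots> = (\<Sum>u\<in>(SIGMA i:{..<n}. B i). w (fst u))" using VS by simp
  also have "\<dots> = (\<Sum>(i,j)\<in>(SIGMA i:{..<n}. B i). w i)" by (simp add: case_prod_unfold)
  also have "\<dots> = (\<Sum>i<n. \<Sum>j\<in>B i. w i)" by (rule sum.Sigma[symmetric]) (simp_all add: finB)
  also have "\<dots> = (\<Sum>i<n. card (B i) * w i)" by simp
  also have "\<dots> \<le> (\<Sum>i<n. 2)"
  proof (rule sum_mono)
    fix i assume "i \<in> {..<n}"
    have "card (B i) \<le> 2" using d unfolding B_def by blast
    then have "card (B i) = 0 \<or> card (B i) = 1 \<or> card (B i) = 2" by linarith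
    then show "card (B i) * w i \<le> 2" unfolding w_def by auto
  qed
  also have "\<dots> = 2*n" by simp
  finally show ?thesis .
qed

lemma wsum_col:
  assumes V: "V \<subseteq> {..<n} \<times> {..<n}" and d: "\<And>j. card {i. (i,j) \<in> V} \<le> 2"
  shows "(\<Sum>u\<in>V. (if card {i. (i, snd u) \<in> V} = 1 then 2 else 1::nat)) \<le> 2*n"
proof -
  define W where "W = prod.swap ` V"
  have WV: "\<And>a b. (a,b) \<in> W \<longleftrightarrow> (b,a) \<in> V" unfolding W_def by force
  have W: "W \<subseteq> {..<n} \<times> {..<n}" using V WV by auto
  have dW: "\<And>i. card {j. (i,j) \<in> W} \<le> 2" using d WV by simp
  have "(\<Sum>u\<in>W. (if card {j. (fst u,j) \<in> W} = 1 then 2 else 1::nat)) \<le> 2*n" by (rule wsum[OF W dW])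
  moreover have "(\<Sum>u\<in>W. (if card {j. (fst u,j) \<in> W} = 1 then 2 else 1::nat))
      = (\<Sum>u\<in>V. (if card {j. (fst (prod.swap u),j) \<in> W} = 1 then 2 else 1::nat))"
    unfolding W_def by (rule sum.reindex_cong[where l = prod.swap]) auto
  moreover have sw: "\<And>u. {j. (snd u,j) \<in> W} = {i. (i, snd u) \<in> V}" using WV by auto
  moreover have "(\<Sum>u\<in>V. (if card {j. (fst (prod.swap u),j) \<in> W} = 1 then 2 else 1::nat))
     = (\<Sum>u\<in>V. (if card {i. (i, snd u) \<in> V} = 1 then 2 else 1::nat))"
    by (rule sum.cong) (simp_all only: fst_swap sw)
  ultimately show ?thesis by simp
qed

lemma card2_other: "card A = 2 \<Longrightarrow> x \<in> A \<Longrightarrow> \<exists>y. y \<in> A \<and> y \<noteq> x"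
  by (metis card_2_iff insertCI)

lemma no_MMM:
  assumes fo: "forced n k F U" and sq: "U \<subseteq> square n" and k: "k = 2*n-2"
    and u: "(i,j) \<in> U" "(i,j') \<in> U" "(i',j) \<in> U" "j \<noteq> j'" "i \<noteq> i'"
    and v2: "card (cU U j') = 2" and w2: "card (rU U i') = 2"
  shows False
proof -
  obtain i'' where i'': "(i'',j') \<in> U" "i'' \<noteq> i" using card2_other[OF v2, of i] u by (auto simp: cU_def)
  obtain j'' where j'': "(i',j'') \<in> U" "j'' \<noteq> j" using card2_other[OF w2, of j] u by (auto simp: rU_def)
  have lt: "i < n" "j < n" "j' < n" "i' < n" "i'' < n" "j'' < n"
    using u i'' j'' sq unfolding square_def by blast+
  show False
  proof (cases "i'' = i'")
    case True
    show False
    proof (cases "j'' = j'")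
      case True
      have "forced n k F {(i,j),(i,j'),(i',j'),(i',j)}" using forced_mono[OF fo] u i'' \<open>i'' = i'\<close> by auto
      from c4_grid[OF this lt(1) lt(4) u(5) lt(2) lt(3) u(4) k] show False .
    next
      case False
      have "forced n k F {(i',j),(i',j'),(i',j'')}" using forced_mono[OF fo] u i'' j'' \<open>i'' = i'\<close> by auto
      from row_three[OF this lt(4) lt(2) lt(3) lt(6) u(4) _ _ k] False j''(2) show False by auto
    qed
  next
    case False
    show False
    proof (cases "j'' = j'")
      case True
      have "forced n k F {(i,j'),(i'',j'),(i',j')}" using forced_mono[OF fo] u i'' j'' \<open>j'' = j'\<close> by auto
      from col_three[OF this lt(3) lt(1) lt(5) lt(4) _ _ u(5) k] False i''(2) show False by auto
    next
      case F2: False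
      have "forced n k F {(i'',j'),(i,j'),(i,j),(i',j),(i',j'')}" using forced_mono[OF fo] u i'' j'' by auto
      from p5_grid[OF this lt(5) lt(1) lt(4) _ u(5) False lt(3) lt(2) lt(6) _ _ _ k] i''(2) u(4) j''(2) F2
      show False by auto
    qed
  qed
qed

lemma count_main:
  assumes fo: "forced n k F U" and sq: "U \<subseteq> square n" and k: "k = 2*n-2"
  shows "5 * card U \<le> 8 * n"
proof -
  define dr where "dr = (\<lambda>i. card (rU U i))"
  define dc where "dc = (\<lambda>j. card (cU U j))"
  have finU: "finite U" using sq unfolding square_def by (rule finite_subset) simp
  have sqU: "U \<subseteq> {..<n} \<times> {..<n}" using sq unfolding square_def .
  have dr2: "\<And>i. dr i \<le> 2" unfolding dr_def using deg_row[OF fo sq k] .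
  have dc2: "\<And>j. dc j \<le> 2" unfolding dc_def using deg_col[OF fo sq k] .
  have dr1: "\<And>u. u \<in> U \<Longrightarrow> 1 \<le> dr (fst u)"
  proof -
    fix u assume "u \<in> U"
    then have "snd u \<in> rU U (fst u)" by (simp add: rU_def)
    then show "1 \<le> dr (fst u)" unfolding dr_def using rU_fin[OF sq]
      by (metis One_nat_def Suc_leI card_gt_0_iff empty_iff)
  qed
  have dc1: "\<And>u. u \<in> U \<Longrightarrow> 1 \<le> dc (snd u)"
  proof -
    fix u assume "u \<in> U"
    then have "fst u \<in> cU U (snd u)" by (simp add: cU_def)
    then show "1 \<le> dc (snd u)" unfolding dc_def using cU_fin[OF sq]
      by (metis One_nat_def Suc_leI card_gt_0_iff empty_iff)
  qed
  define wr where "wr = (\<lambda>u::nat\<times>nat. if dr (fst u) = 1 then 2 else (1::nat))"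
  define wc where "wc = (\<lambda>u::nat\<times>nat. if dc (snd u) = 1 then 2 else (1::nat))"
  have SR: "(\<Sum>u\<in>U. wr u) \<le> 2*n"
    using wsum[OF sqU] deg_row[OF fo sq k] unfolding wr_def dr_def rU_def by simp
  have SC: "(\<Sum>u\<in>U. wc u) \<le> 2*n"
    using wsum_col[OF sqU] deg_col[OF fo sq k] unfolding wc_def dc_def cU_def by simp
  define M where "M = {u\<in>U. dr (fst u) = 2 \<and> dc (snd u) = 2}"
  have MU: "M \<subseteq> U" unfolding M_def by blast
  have finM: "finite M" using finite_subset[OF MU finU] .
  define rm where "rm = (\<lambda>u::nat\<times>nat. (fst u, SOME j'. (fst u, j') \<in> U \<and> j' \<noteq> snd u))"
  define cm where "cm = (\<lambda>u::nat\<times>nat. (SOME i'. (i', snd u) \<in> U \<and> i' \<noteq> fst u, snd u))"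
  have rmP: "\<And>u. u \<in> M \<Longrightarrow> rm u \<in> U \<and> fst (rm u) = fst u \<and> snd (rm u) \<noteq> snd u"
  proof -
    fix u assume uM: "u \<in> M"
    then have "card (rU U (fst u)) = 2" "snd u \<in> rU U (fst u)" unfolding M_def dr_def rU_def by auto
    then have "\<exists>j'. (fst u, j') \<in> U \<and> j' \<noteq> snd u" using card2_other by (fastforce simp: rU_def)
    from someI_ex[OF this] show "rm u \<in> U \<and> fst (rm u) = fst u \<and> snd (rm u) \<noteq> snd u"
      unfolding rm_def by simp
  qed
  have cmP: "\<And>u. u \<in> M \<Longrightarrow> cm u \<in> U \<and> snd (cm u) = snd u \<and> fst (cm u) \<noteq> fst u"
  proof -
    fix u assume uM: "u \<in> M"
    then have "card (cU U (snd u)) = 2" "fst u \<in> cU U (snd u)" unfolding M_def dc_def cU_def by auto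
    then have "\<exists>i'. (i', snd u) \<in> U \<and> i' \<noteq> fst u" using card2_other by (fastforce simp: cU_def)
    from someI_ex[OF this] show "cm u \<in> U \<and> snd (cm u) = snd u \<and> fst (cm u) \<noteq> fst u"
      unfolding cm_def by simp
  qed
  define phi where "phi = (\<lambda>u. if rm u \<in> M then cm u else rm u)"
  have phiN: "\<And>u. u \<in> M \<Longrightarrow> phi u \<in> U - M"
  proof -
    fix u assume uM: "u \<in> M"
    show "phi u \<in> U - M"
    proof (cases "rm u \<in> M")
      case False
      then show ?thesis using rmP[OF uM] unfolding phi_def by simp
    next
      case True
      have "cm u \<notin> M"
      proof
        assume cM: "cm u \<in> M"
        obtain i j where u: "u = (i,j)" by fastforce
        obtain j' where rmu: "rm u = (i,j')" using rmP[OF uM] u by (metis prod.collapse fst_conv)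
        obtain i' where cmu: "cm u = (i',j)" using cmP[OF uM] u by (metis prod.collapse snd_conv)
        have "(i,j) \<in> U" using uM u MU by blast
        moreover have "(i,j') \<in> U" "j \<noteq> j'" using rmP[OF uM] u rmu by auto
        moreover have "(i',j) \<in> U" "i \<noteq> i'" using cmP[OF uM] u cmu by auto
        moreover have "card (cU U j') = 2" using True rmu unfolding M_def dc_def by auto
        moreover have "card (rU U i') = 2" using cM cmu unfolding M_def dr_def by auto
        ultimately show False using no_MMM[OF fo sq k] by blast
      qed
      then show ?thesis using True cmP[OF uM] unfolding phi_def by simp
    qed
  qed
  have phiL: "\<And>u. u \<in> M \<Longrightarrow> (fst (phi u) = fst u \<and> snd (phi u) \<noteq> snd u) \<or> (snd (phi u) = snd u \<and> fst (phi u) \<noteq> fst u)"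
    using rmP cmP unfolding phi_def by auto
  have inj: "inj_on phi M"
  proof (rule inj_onI)
    fix u1 u2 assume u1: "u1 \<in> M" and u2: "u2 \<in> M" and eq: "phi u1 = phi u2"
    show "u1 = u2"
    proof (rule ccontr)
      assume ne: "u1 \<noteq> u2"
      obtain a b where e: "phi u1 = (a,b)" by fastforce
      have eN: "(a,b) \<in> U - M" using phiN[OF u1] e by simp
      have u1U: "u1 \<in> U" and u2U: "u2 \<in> U" using u1 u2 MU by auto
      have L1: "(fst u1 = a \<and> snd u1 \<noteq> b) \<or> (snd u1 = b \<and> fst u1 \<noteq> a)" using phiL[OF u1] e by auto
      have L2: "(fst u2 = a \<and> snd u2 \<noteq> b) \<or> (snd u2 = b \<and> fst u2 \<noteq> a)" using phiL[OF u2] e eq by auto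
      have rfin: "finite (rU U a)" and cfin: "finite (cU U b)" using rU_fin[OF sq] cU_fin[OF sq] by auto
      have bR: "b \<in> rU U a" and aC: "a \<in> cU U b" using eN by (auto simp: rU_def cU_def)
      show False
      proof (cases "fst u1 = a")
        case True
        with L1 have s1: "snd u1 \<noteq> b" by auto
        have s1R: "snd u1 \<in> rU U a" using u1U True by (auto simp: rU_def)
        show False
        proof (cases "fst u2 = a")
          case True
          with L2 have s2: "snd u2 \<noteq> b" by auto
          have s2R: "snd u2 \<in> rU U a" using u2U True by (auto simp: rU_def)
          have "snd u1 \<noteq> snd u2" using ne \<open>fst u1 = a\<close> True by (metis prod.collapse)
          then have "card {b, snd u1, snd u2} = 3" using s1 s2 by auto
          moreover have "card {b, snd u1, snd u2} \<le> card (rU U a)"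
            using bR s1R s2R rfin by (intro card_mono) auto
          ultimately show False using dr2[of a] unfolding dr_def by linarith
        next
          case False
          with L2 have s2: "snd u2 = b" by auto
          have f2C: "fst u2 \<in> cU U b" using u2U s2 by (auto simp: cU_def)
          have "card {b, snd u1} = 2" using s1 by auto
          moreover have "card {b, snd u1} \<le> card (rU U a)" using bR s1R rfin by (intro card_mono) auto
          moreover have "card {a, fst u2} = 2" using False by auto
          moreover have "card {a, fst u2} \<le> card (cU U b)" using aC f2C cfin by (intro card_mono) auto
          ultimately have "dr a = 2" "dc b = 2" using dr2[of a] dc2[of b] unfolding dr_def dc_def by linarith+
          then show False using eN unfolding M_def by auto
        qed
      next
        case False
        with L1 have s1: "snd u1 = b" by auto
        have f1C: "fst u1 \<in> cU U b" using u1U s1 by (auto simp: cU_def)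
        show False
        proof (cases "fst u2 = a")
          case True
          with L2 have s2: "snd u2 \<noteq> b" by auto
          have s2R: "snd u2 \<in> rU U a" using u2U True by (auto simp: rU_def)
          have "card {b, snd u2} = 2" using s2 by auto
          moreover have "card {b, snd u2} \<le> card (rU U a)" using bR s2R rfin by (intro card_mono) auto
          moreover have "card {a, fst u1} = 2" using False by auto
          moreover have "card {a, fst u1} \<le> card (cU U b)" using aC f1C cfin by (intro card_mono) auto
          ultimately have "dr a = 2" "dc b = 2" using dr2[of a] dc2[of b] unfolding dr_def dc_def by linarith+
          then show False using eN unfolding M_def by auto
        next
          case F2: False
          with L2 have s2: "snd u2 = b" by auto
          have f2C: "fst u2 \<in> cU U b" using u2U s2 by (auto simp: cU_def)
          have "fst u1 \<noteq> fst u2" using ne s1 s2 by (metis prod.collapse)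
          then have "card {a, fst u1, fst u2} = 3" using False F2 by auto
          moreover have "card {a, fst u1, fst u2} \<le> card (cU U b)"
            using aC f1C f2C cfin by (intro card_mono) auto
          ultimately show False using dc2[of b] unfolding dc_def by linarith
        qed
      qed
    qed
  qed
  have MN: "card M \<le> card (U - M)"
    by (rule card_inj_on_le[OF inj]) (use phiN finU in auto)
  have w2: "\<And>u. u \<in> U \<Longrightarrow> 2 \<le> wr u + wc u" unfolding wr_def wc_def by auto
  have w3: "\<And>u. u \<in> U - M \<Longrightarrow> 3 \<le> wr u + wc u"
  proof -
    fix u assume uN: "u \<in> U - M"
    then have "dr (fst u) = 1 \<or> dc (snd u) = 1"
      using dr1[of u] dc1[of u] dr2[of "fst u"] dc2[of "snd u"] unfolding M_def by auto
    then show "3 \<le> wr u + wc u" unfolding wr_def wc_def by auto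
  qed
  have "(\<Sum>u\<in>U. wr u + wc u) = (\<Sum>u\<in>U - M. wr u + wc u) + (\<Sum>u\<in>M. wr u + wc u)"
    by (rule sum.subset_diff[OF MU finU])
  moreover have "card (U - M) * 3 \<le> (\<Sum>u\<in>U - M. wr u + wc u)"
    using sum_bounded_below[of "U - M" 3 "\<lambda>u. wr u + wc u"] w3 by simp
  moreover have "card M * 2 \<le> (\<Sum>u\<in>M. wr u + wc u)"
    using sum_bounded_below[of M 2 "\<lambda>u. wr u + wc u"] w2 MU by auto
  moreover have "(\<Sum>u\<in>U. wr u + wc u) = (\<Sum>u\<in>U. wr u) + (\<Sum>u\<in>U. wc u)" by (rule sum.distrib)
  moreover have "card U = card (U - M) + card M" using card_Diff_subset[OF finM MU] card_mono[OF finU MU] by simp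
  ultimately show ?thesis using SR SC MN by linarith
qed

lemma Lset_latin:
  assumes "f \<in> L_set n k"
  shows "latin n k (\<lambda>i j. the (f (i,j)))" and "\<And>i j. i < n \<Longrightarrow> j < n \<Longrightarrow> f (i,j) = Some (the (f (i,j)))"
proof -
  have d: "dom f = square n" and r: "ran f \<subseteq> {1..k}"
    and rw: "\<forall>i<n. \<forall>j<n. \<forall>j'<n. j \<noteq> j' \<longrightarrow> f (i,j) \<noteq> f (i,j')"
    and cl: "\<forall>j<n. \<forall>i<n. \<forall>i'<n. i \<noteq> i' \<longrightarrow> f (i,j) \<noteq> f (i',j)"
    using assms unfolding L_set_def by auto
  have S: "\<And>i j. i < n \<Longrightarrow> j < n \<Longrightarrow> f (i,j) = Some (the (f (i,j)))"
  proof -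
    fix i j assume "i < n" "j < n"
    then have "(i,j) \<in> dom f" using d by (simp add: square_def)
    then show "f (i,j) = Some (the (f (i,j)))" by auto
  qed
  then show "\<And>i j. i < n \<Longrightarrow> j < n \<Longrightarrow> f (i,j) = Some (the (f (i,j)))" .
  show "latin n k (\<lambda>i j. the (f (i,j)))"
  proof (rule latinI)
    fix i j assume ij: "i < n" "j < n"
    then have "the (f (i,j)) \<in> ran f" using S[OF ij] by (metis ranI)
    then show "1 \<le> the (f (i,j)) \<and> the (f (i,j)) \<le> k" using r by auto
  next
    fix i j j' assume "i<n" "j<n" "j'<n" "j \<noteq> j'"
    then show "the (f (i,j)) \<noteq> the (f (i,j'))" using rw S by metis
  next
    fix i i' j assume "i<n" "i'<n" "j<n" "i \<noteq> i'"
    then show "the (f (i,j)) \<noteq> the (f (i',j))" using cl S by metis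
  qed
qed

definition mk :: "nat \<Rightarrow> (nat \<Rightarrow> nat \<Rightarrow> nat) \<Rightarrow> (nat \<times> nat \<rightharpoonup> nat)" where
  "mk n G = (\<lambda>(i,j). if i < n \<and> j < n then Some (G i j) else None)"

lemma mk_app: "mk n G (i,j) = (if i < n \<and> j < n then Some (G i j) else None)"
  by (simp add: mk_def)

lemma latin_Lset:
  assumes L: "latin n k G" shows "mk n G \<in> L_set n k"
proof -
  have "dom (mk n G) = square n" by (auto simp: mk_def square_def split: if_splits)
  moreover have "ran (mk n G) \<subseteq> {1..k}"
  proof
    fix c assume "c \<in> ran (mk n G)"
    then obtain x where "mk n G x = Some c" by (auto simp: ran_def)
    then obtain i j where "i < n" "j < n" "c = G i j" by (cases x) (auto simp: mk_def split: if_splits)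
    then show "c \<in> {1..k}" using latin_val[OF L] by auto
  qed
  moreover have "\<forall>i<n. \<forall>j<n. \<forall>j'<n. j \<noteq> j' \<longrightarrow> mk n G (i,j) \<noteq> mk n G (i,j')"
    using latin_row[OF L] by (simp add: mk_app)
  moreover have "\<forall>j<n. \<forall>i<n. \<forall>i'<n. i \<noteq> i' \<longrightarrow> mk n G (i,j) \<noteq> mk n G (i',j)"
    using latin_col[OF L] by (simp add: mk_app)
  ultimately show ?thesis unfolding L_set_def by blast
qed

lemma bound:
  assumes pc: "partial_coloring n k P" and ue: "uniquely_extends n k P" and k: "k = 2*n-2"
  shows "5 * (n*n - card (dom P)) \<le> 8*n \<and> card (dom P) \<le> n*n"
proof -
  obtain f where f: "f \<in> L_set n k" "P \<subseteq>\<^sub>m f" and uq: "\<And>g. g \<in> L_set n k \<Longrightarrow> P \<subseteq>\<^sub>m g \<Longrightarrow> g = f"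
    using ue unfolding uniquely_extends_def by blast
  define F where "F = (\<lambda>i j. the (f (i,j)))"
  have L: "latin n k F" using Lset_latin(1)[OF f(1)] unfolding F_def .
  have fF: "\<And>i j. i < n \<Longrightarrow> j < n \<Longrightarrow> f (i,j) = Some (F i j)" using Lset_latin(2)[OF f(1)] unfolding F_def .
  have dP: "dom P \<subseteq> square n" using pc unfolding partial_coloring_def by blast
  define U where "U = square n - dom P"
  have sq: "U \<subseteq> square n" unfolding U_def by blast
  have fo: "forced n k F U"
    unfolding forced_def
  proof (intro conjI allI impI)
    show "latin n k F" by (rule L)
  next
    fix G i j assume G: "latin n k G" and agree: "\<forall>i<n. \<forall>j<n. (i, j) \<notin> U \<longrightarrow> G i j = F i j"
      and ij: "i < n" "j < n"
    have "P \<subseteq>\<^sub>m mk n G"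
    proof (rule map_le_def[THEN iffD2], rule ballI)
      fix x assume xP: "x \<in> dom P"
      obtain a b where x: "x = (a,b)" by fastforce
      have ab: "a < n" "b < n" using xP dP x by (auto simp: square_def)
      have "x \<notin> U" using xP unfolding U_def by blast
      then have "G a b = F a b" using agree ab x by blast
      then have "mk n G x = f x" using fF[OF ab] ab x by (simp add: mk_app)
      moreover have "P x = f x" using f(2) xP by (auto simp: map_le_def)
      ultimately show "P x = mk n G x" by simp
    qed
    then have "mk n G = f" using uq latin_Lset[OF G] by blast
    then have "mk n G (i,j) = f (i,j)" by simp
    then show "G i j = F i j" using fF[OF ij] ij by (simp add: mk_app)
  qed
  have "5 * card U \<le> 8 * n" by (rule count_main[OF fo sq k])
  moreover have "card U = n*n - card (dom P)"
  proof -
    have fs: "finite (square n)" unfolding square_def by simp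
    have "card (square n) = n*n" unfolding square_def by (simp add: card_cartesian_product)
    then show ?thesis unfolding U_def using card_Diff_subset[OF finite_subset[OF dP fs] dP] by simp
  qed
  moreover have "card (dom P) \<le> n*n"
  proof -
    have fs: "finite (square n)" unfolding square_def by simp
    have "card (square n) = n*n" unfolding square_def by (simp add: card_cartesian_product)
    then show ?thesis using card_mono[OF fs dP] by simp
  qed
  ultimately show ?thesis by simp
qed

lemma mod_sum_eq: assumes "(a::nat) < n" "b < n"
  shows "(a+b) mod n = (if a+b < n then a+b else a+b-n)"
proof (cases "a+b < n")
  case True then show ?thesis by simp
next
  case False
  then have "(a+b) mod n = (a+b-n) mod n" by (simp add: le_mod_geq)
  also have "\<dots> = a+b-n" using assms False by (intro mod_less) linarith
  finally show ?thesis using False by simp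
qed

lemma cyc_inj: assumes "(a::nat) < n" "b < n" "c < n" "(a+b) mod n = (a+c) mod n" shows "b = c"
  using assms mod_sum_eq[OF assms(1,2)] mod_sum_eq[OF assms(1,3)] by (auto split: if_splits)

lemma exists_def_set:
  assumes n: "n \<ge> 2" and k: "k = 2*n-2"
  shows "\<exists>P. partial_coloring n k P \<and> uniquely_extends n k P"
proof -
  define G where "G = (\<lambda>i j. (i + j) mod n + 1)"
  have L: "latin n k G"
  proof (rule latinI)
    fix i j assume "i < n" "j < n"
    have "(i + j) mod n < n" using n by simp
    then show "1 \<le> G i j \<and> G i j \<le> k" unfolding G_def using n k by linarith
  next
    fix i j j' assume "i<n" "j<n" "j'<n" "j \<noteq> j'"
    then show "G i j \<noteq> G i j'" unfolding G_def using cyc_inj[of i n j j'] by auto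
  next
    fix i i' j assume "i<n" "i'<n" "j<n" "i \<noteq> i'"
    then show "G i j \<noteq> G i' j" unfolding G_def using cyc_inj[of j n i i'] by (auto simp: add.commute)
  qed
  define P where "P = mk n G"
  have PL: "P \<in> L_set n k" unfolding P_def by (rule latin_Lset[OF L])
  have "partial_coloring n k P" using PL unfolding partial_coloring_def L_set_def by auto
  moreover have "uniquely_extends n k P"
    unfolding uniquely_extends_def
  proof (rule ex1I[of _ P])
    show "P \<in> L_set n k \<and> P \<subseteq>\<^sub>m P" using PL by simp
  next
    fix g assume g: "g \<in> L_set n k \<and> P \<subseteq>\<^sub>m g"
    have "dom g = dom P" using g PL unfolding L_set_def by auto
    then show "g = P" using g map_le_antisym map_le_def by (metis domIff)
  qed
  ultimately show ?thesis by blast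
qed

theorem mainTheorem2:
  fixes n :: nat
  assumes "n \<ge> 1"
  shows "int (defining_number n (2*n - 2)) \<ge> int (n^2) - \<lfloor>8 * real n / 5\<rfloor>"
proof (cases "n = 1")
  case True
  then show ?thesis by simp
next
  case False
  then have n2: "n \<ge> 2" using assms by simp
  define k where "k = 2*n-2"
  define X where "X = {card (dom P) | P. partial_coloring n k P \<and> uniquely_extends n k P}"
  have ne: "X \<noteq> {}" using exists_def_set[OF n2 k_def] unfolding X_def by blast
  have lb: "\<And>x. x \<in> X \<Longrightarrow> n*n - 8*n div 5 \<le> x"
  proof -
    fix x assume "x \<in> X"
    then obtain P where P: "x = card (dom P)" "partial_coloring n k P" "uniquely_extends n k P"
      unfolding X_def by blast
    have "5 * (n*n - x) \<le> 8*n" "x \<le> n*n" using bound[OF P(2) P(3) k_def] P(1) by auto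
    then have "n*n - x \<le> 8*n div 5" by (simp add: less_eq_div_iff_mult_less_eq mult.commute)
    then show "n*n - 8*n div 5 \<le> x" by linarith
  qed
  have "n*n - 8*n div 5 \<le> Inf X" by (rule cInf_greatest[OF ne lb])
  moreover have "defining_number n (2*n-2) = Inf X" unfolding defining_number_def X_def k_def by simp
  ultimately have D: "n*n - 8*n div 5 \<le> defining_number n (2*n-2)" by simp
  have fl: "\<lfloor>8 * real n / 5\<rfloor> = int (8*n div 5)"
  proof -
    have "8 * real n / 5 = real (8*n) / real 5" by simp
    then show ?thesis by (simp only: floor_divide_of_nat_eq)
  qed
  have "int (n^2) - int (8*n div 5) \<le> int (n*n - 8*n div 5)"
  proof (cases "8*n div 5 \<le> n*n")
    case True then show ?thesis by (simp add: power2_eq_square of_nat_diff)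
  next
    case False
    then have "int (n*n) \<le> int (8*n div 5)" by linarith
    then show ?thesis by (simp add: power2_eq_square)
  qed
  also have "\<dots> \<le> int (defining_number n (2*n-2))" using D by simp
  finally show ?thesis using fl by simp
qed

end
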